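(* Let $Y=(Y_1,\dots,Y_m)$ be obtained by applying dependent rounding with a fixed tournament tree (as in the context) to $y^*$, and let $C=\{F_i: Y_i=1\}$ (a set of exactly $k$ facilities). Then for every client $D_j$, $j\in[n]$, $$\mathbb{E}\Big[\sum_{i=1}^k \tfrac{1}{i}\,c^{\rightarrow}_i(C,j)\Big]\;\le\;2.3589\cdot \mathrm{OPT}^{LP}_j,\qquad\text{where } \mathrm{OPT}^{LP}_j=\sum_{\ell=1}^k\sum_{i=1}^m \tfrac1\ell\, x^{*\ell}_{ij}c_{ij}.$$
   Context: Instance: clients $D_1,\dots,D_n$, facilities $F_1,\dots,F_m$, nonnegative costs $c_{i,j}$, integer $k\le m$. For a $k$-set $C$ of facilities, $c^{\rightarrow}_1(C,j)\le\dots\le c^{\rightarrow}_k(C,j)$ are the costs $\{c_{i,j}:F_i\in C\}$ sorted non-decreasingly. Linear program: minimize $\sum_{j=1}^n\sum_{\ell=1}^k\sum_{i=1}^m \frac1\ell x^\ell_{ij}c_{ij}$ subject to $\sum_{i=1}^m y_i=k$; $\sum_{\ell=1}^k x^\ell_{ij}\le y_i$ for all $i,j$; $\sum_{i=1}^m x^\ell_{ij}\ge 1$ for all $j\in[n],\ell\in[k]$; $y_i,x^\ell_{ij}\in[0,1]$. Let $(x^*,y^* )$ be an optimal solution. Dependent rounding with a fixed tournament tree: fix a rooted binary tree with $m$ leaves, leaf $i$ holding variable $y_i$ initialized to $y^*_i$; repeatedly take two nonempty sibling nodes whose parent is empty. If both hold fractional variables $y_a,y_b$ with $s=y_a+y_b$: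 if $s\le1$, with probability $y_a/s$ set $(y_a,y_b)\leftarrow(s,0)$, else $(0,s)$; if $s>1$, with probability $(1-y_b)/(2-s)$ set $(y_a,y_b)\leftarrow(1,s-1)$, else $(s-1,1)$. A still-fractional variable is promoted to the parent; if both became integral a dummy $\bot$ is promoted; if one node holds $\bot$ (or an integral variable) the other node's content is promoted unchanged. $Y_i$ is the final (0/1) value of $y_i$. *)

theory Defs
  imports "HOL-Probability.Probability"
begin

text \<open>Facilities are indexed by i < m, clients by j < n, costs c i j.
  LP variables: y i (i < m) and x l i j (1 \<le> l \<le> k, i < m, j < n).\<close>

definition lp_feasible ::
  "nat \<Rightarrow> nat \<Rightarrow> nat \<Rightarrow> (nat \<Rightarrow> nat \<Rightarrow> nat \<Rightarrow> real) \<Rightarrow> (nat \<Rightarrow> real) \<Rightarrow> bool" where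
  "lp_feasible m n k x y \<longleftrightarrow>
     (\<Sum>i<m. y i) = real k \<and>
     (\<forall>i<m. \<forall>j<n. (\<Sum>l\<in>{1..k}. x l i j) \<le> y i) \<and>
     (\<forall>j<n. \<forall>l\<in>{1..k}. (\<Sum>i<m. x l i j) \<ge> 1) \<and>
     (\<forall>i<m. 0 \<le> y i \<and> y i \<le> 1) \<and>
     (\<forall>l\<in>{1..k}. \<forall>i<m. \<forall>j<n. 0 \<le> x l i j \<and> x l i j \<le> 1)"

definition lp_client_cost ::
  "nat \<Rightarrow> nat \<Rightarrow> (nat \<Rightarrow> nat \<Rightarrow> real) \<Rightarrow> (nat \<Rightarrow> nat \<Rightarrow> nat \<Rightarrow> real) \<Rightarrow> nat \<Rightarrow> real" where
  "lp_client_cost m k c x j = (\<Sum>l\<in>{1..k}. \<Sum>i<m. (1 / real l) * x l i j * c i j)"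

definition lp_obj ::
  "nat \<Rightarrow> nat \<Rightarrow> nat \<Rightarrow> (nat \<Rightarrow> nat \<Rightarrow> real) \<Rightarrow> (nat \<Rightarrow> nat \<Rightarrow> nat \<Rightarrow> real) \<Rightarrow> real" where
  "lp_obj m n k c x = (\<Sum>j<n. lp_client_cost m k c x j)"

definition lp_optimal ::
  "nat \<Rightarrow> nat \<Rightarrow> nat \<Rightarrow> (nat \<Rightarrow> nat \<Rightarrow> real) \<Rightarrow> (nat \<Rightarrow> nat \<Rightarrow> nat \<Rightarrow> real) \<Rightarrow> (nat \<Rightarrow> real) \<Rightarrow> bool" where
  "lp_optimal m n k c x y \<longleftrightarrow> lp_feasible m n k x y \<and>
     (\<forall>x' y'. lp_feasible m n k x' y' \<longrightarrow> lp_obj m n k c x \<le> lp_obj m n k c x')"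

text \<open>Rooted binary (tournament) trees; leaves carry facility indices.\<close>
datatype ttree = Leaf nat | Node ttree ttree

fun leaves :: "ttree \<Rightarrow> nat list" where
  "leaves (Leaf i) = [i]"
| "leaves (Node l r) = leaves l @ leaves r"

definition frac :: "real \<Rightarrow> bool" where
  "frac v \<longleftrightarrow> 0 < v \<and> v < 1"

text \<open>Content of a node: Some a = fractional variable y_a; None = dummy / integral.\<close>
definition promote :: "nat \<Rightarrow> nat \<Rightarrow> (nat \<Rightarrow> real) \<Rightarrow> nat option" where
  "promote a b y = (if frac (y a) then Some a else if frac (y b) then Some b else None)"

definition pair_step :: "nat \<Rightarrow> nat \<Rightarrow> (nat \<Rightarrow> real) \<Rightarrow> (nat option \<times> (nat \<Rightarrow> real)) pmf" where
  "pair_step a b y = (let s = y a + y b in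
     if s \<le> 1 then
       map_pmf (\<lambda>coin. let y' = (if coin then y(a := s, b := 0) else y(a := 0, b := s))
                       in (promote a b y', y')) (bernoulli_pmf (y a / s))
     else
       map_pmf (\<lambda>coin. let y' = (if coin then y(a := 1, b := s - 1) else y(a := s - 1, b := 1))
                       in (promote a b y', y')) (bernoulli_pmf ((1 - y b) / (2 - s))))"

definition combine :: "nat option \<Rightarrow> nat option \<Rightarrow> (nat \<Rightarrow> real) \<Rightarrow> (nat option \<times> (nat \<Rightarrow> real)) pmf" where
  "combine oa ob y = (case (oa, ob) of
      (Some a, Some b) \<Rightarrow> pair_step a b y
    | (Some a, None) \<Rightarrow> return_pmf (Some a, y)
    | (None, ob') \<Rightarrow> return_pmf (ob', y))"

text \<open>Bottom-up dependent rounding along the tree; returns the content promoted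
  to the root together with the current values of all variables.\<close>
fun dep_round :: "ttree \<Rightarrow> (nat \<Rightarrow> real) \<Rightarrow> (nat option \<times> (nat \<Rightarrow> real)) pmf" where
  "dep_round (Leaf i) y = return_pmf (if frac (y i) then Some i else None, y)"
| "dep_round (Node l r) y =
     bind_pmf (dep_round l y) (\<lambda>(a, y1).
       bind_pmf (dep_round r y1) (\<lambda>(b, y2). combine a b y2))"

definition rounded :: "ttree \<Rightarrow> (nat \<Rightarrow> real) \<Rightarrow> (nat \<Rightarrow> real) pmf" where
  "rounded T y = map_pmf snd (dep_round T y)"

text \<open>c^{\<rightarrow>}_l(C,j) for l = 1..|C| is  sorted_costs c C j ! (l-1).\<close>
definition sorted_costs :: "(nat \<Rightarrow> nat \<Rightarrow> real) \<Rightarrow> nat set \<Rightarrow> nat \<Rightarrow> real list" where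
  "sorted_costs c C j = sort (map (\<lambda>i. c i j) (sorted_list_of_set C))"

definition ordered_cost :: "(nat \<Rightarrow> nat \<Rightarrow> real) \<Rightarrow> nat \<Rightarrow> nat set \<Rightarrow> nat \<Rightarrow> real" where
  "ordered_cost c k C j = (\<Sum>l\<in>{1..k}. (1 / real l) * (sorted_costs c C j ! (l - 1)))"

end

theory Submission
  imports Defs
begin


definition ev :: "nat set \<Rightarrow> (nat \<Rightarrow> real) \<Rightarrow> (nat \<Rightarrow> real) \<Rightarrow> real" where
  "ev S y h = (\<Sum>A\<in>Pow S. ((\<Prod>i\<in>A. y i) * (\<Prod>i\<in>S - A. 1 - y i)) * h (card A))"

lemma ev_empty[simp]: "ev {} y h = h 0"
  by (simp add: ev_def)

lemma ev_insert:
  assumes "finite S" "a \<notin> S"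
  shows "ev (insert a S) y h = y a * ev S y (\<lambda>n. h (Suc n)) + (1 - y a) * ev S y h"
proof -
  have P: "Pow (insert a S) = Pow S \<union> insert a ` Pow S" by (rule Pow_insert)
  have D: "Pow S \<inter> insert a ` Pow S = {}" using assms by auto
  have inj: "inj_on (insert a) (Pow S)" using assms by (auto simp: inj_on_def) 
  have fin: "finite (Pow S)" using assms by simp
  have s1: "(\<Sum>A\<in>Pow S. ((\<Prod>i\<in>A. y i) * (\<Prod>i\<in>insert a S - A. 1 - y i)) * h (card A))
      = (1 - y a) * ev S y h"
    unfolding ev_def sum_distrib_left
  proof (intro sum.cong refl)
    fix A assume A: "A \<in> Pow S"
    have e: "insert a S - A = insert a (S - A)" using assms A by auto
    have "(\<Prod>i\<in>insert a S - A. 1 - y i) = (1 - y a) * (\<Prod>i\<in>S - A. 1 - y i)"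
      unfolding e using assms by (subst prod.insert) auto
    then show "((\<Prod>i\<in>A. y i) * (\<Prod>i\<in>insert a S - A. 1 - y i)) * h (card A) =
        (1 - y a) * ((\<Prod>i\<in>A. y i) * (\<Prod>i\<in>S - A. 1 - y i) * h (card A))" by simp
  qed
  have s2: "(\<Sum>A\<in>insert a ` Pow S. ((\<Prod>i\<in>A. y i) * (\<Prod>i\<in>insert a S - A. 1 - y i)) * h (card A))
      = y a * ev S y (\<lambda>n. h (Suc n))"
  proof -
    have "(\<Sum>A\<in>insert a ` Pow S. ((\<Prod>i\<in>A. y i) * (\<Prod>i\<in>insert a S - A. 1 - y i)) * h (card A))
       = (\<Sum>A\<in>Pow S. ((\<Prod>i\<in>insert a A. y i) * (\<Prod>i\<in>insert a S - insert a A. 1 - y i)) * h (card (insert a A)))"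
      by (rule sum.reindex[OF inj, unfolded comp_def])
    also have "\<dots> = y a * ev S y (\<lambda>n. h (Suc n))"
      unfolding ev_def sum_distrib_left
    proof (intro sum.cong refl)
      fix A assume A: "A \<in> Pow S"
      then have fA: "finite A" "a \<notin> A" using assms finite_subset by auto
      have "insert a S - insert a A = S - A" using assms A by auto
      then show "((\<Prod>i\<in>insert a A. y i) * (\<Prod>i\<in>insert a S - insert a A. 1 - y i)) * h (card (insert a A))
          = y a * ((\<Prod>i\<in>A. y i) * (\<Prod>i\<in>S - A. 1 - y i) * h (Suc (card A)))"
        using fA by (simp add: algebra_simps)
    qed
    finally show ?thesis .
  qed
  show ?thesis
    unfolding ev_def[of "insert a S"] P
    apply (subst sum.union_disjoint)
    using fin D s1 s2 by (auto simp: ev_def)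
qed

lemma ev_cong:
  assumes "\<And>i. i \<in> S \<Longrightarrow> y i = y' i"
  shows "ev S y h = ev S y' h"
  unfolding ev_def
proof (intro sum.cong refl)
  fix A assume A: "A \<in> Pow S"
  have "(\<Prod>i\<in>A. y i) = (\<Prod>i\<in>A. y' i)" using A assms by (intro prod.cong) auto
  moreover have "(\<Prod>i\<in>S - A. 1 - y i) = (\<Prod>i\<in>S - A. 1 - y' i)" using assms by (intro prod.cong) auto
  ultimately show "(\<Prod>i\<in>A. y i) * (\<Prod>i\<in>S - A. 1 - y i) * h (card A) =
      (\<Prod>i\<in>A. y' i) * (\<Prod>i\<in>S - A. 1 - y' i) * h (card A)" by simp
qed

lemma ev_lin: "ev S y (\<lambda>n. a * f n + b * g n) = a * ev S y f + b * ev S y g"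
  unfolding ev_def by (simp add: sum.distrib sum_distrib_left algebra_simps)

lemma ev_add: "ev S y (\<lambda>n. f n + g n) = ev S y f + ev S y g"
  using ev_lin[of S y 1 f 1 g] by simp

lemma ev_diff: "ev S y (\<lambda>n. f n - g n) = ev S y f - ev S y g"
  using ev_lin[of S y 1 f "-1" g] by simp

lemma ev_scale: "ev S y (\<lambda>n. a * f n) = a * ev S y f"
  using ev_lin[of S y a f 0 f] by simp

lemma ev_const: "finite S \<Longrightarrow> ev S y (\<lambda>_. c) = c"
  by (induction S rule: finite_induct) (auto simp: ev_insert algebra_simps)

lemma ev_nonneg:
  assumes "\<And>i. i \<in> S \<Longrightarrow> 0 \<le> y i \<and> y i \<le> 1" "\<And>n. 0 \<le> f n"
  shows "0 \<le> ev S y f"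
  unfolding ev_def
proof (intro sum_nonneg mult_nonneg_nonneg prod_nonneg)
  fix A x assume "A \<in> Pow S" "x \<in> A" then show "0 \<le> y x" using assms by auto
next
  fix A x assume "A \<in> Pow S" "x \<in> S - A" then show "0 \<le> 1 - y x" using assms by auto
qed (use assms in auto)

lemma ev_mono:
  assumes "\<And>i. i \<in> S \<Longrightarrow> 0 \<le> y i \<and> y i \<le> 1" "\<And>n. f n \<le> g n"
  shows "ev S y f \<le> ev S y g"
proof -
  have "0 \<le> ev S y (\<lambda>n. g n - f n)" using assms by (intro ev_nonneg) auto
  then show ?thesis by (simp add: ev_diff)
qed

lemma ev_01:
  assumes "finite S" "\<And>i. i \<in> S \<Longrightarrow> y i = 0 \<or> y i = 1"
  shows "ev S y h = h (card {i\<in>S. y i = 1})"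
  using assms
proof (induction S arbitrary: h rule: finite_induct)
  case empty then show ?case by simp
next
  case (insert a S)
  have fin: "finite {i\<in>S. y i = 1}" using insert by simp
  show ?case
  proof (cases "y a = 1")
    case True
    then have "{i \<in> insert a S. y i = 1} = insert a {i\<in>S. y i = 1}" by auto
    moreover have "a \<notin> {i\<in>S. y i = 1}" using insert by auto
    ultimately show ?thesis using True insert fin by (simp add: ev_insert)
  next
    case False
    then have y0: "y a = 0" using insert by auto
    then have "{i \<in> insert a S. y i = 1} = {i\<in>S. y i = 1}" by auto
    then show ?thesis using y0 insert by (simp add: ev_insert)
  qed
qed

lemma ev_id: "finite S \<Longrightarrow> ev S y real = (\<Sum>i\<in>S. y i)"
proof (induction S rule: finite_induct)
  case (insert a S)
  have "ev S y (\<lambda>n. 1 + real n) = ev S y real + 1"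
    using ev_add[of S y "\<lambda>_. 1" real] ev_const[OF insert(1)] by simp
  then show ?case using insert by (simp add: ev_insert algebra_simps)
qed simp

lemma ev_pow: "finite S \<Longrightarrow> ev S y (\<lambda>n. u ^ n) = (\<Prod>i\<in>S. 1 - (1 - u) * y i)"
proof (induction S rule: finite_induct)
  case (insert a S)
  have "ev S y (\<lambda>n. u ^ Suc n) = u * ev S y (\<lambda>n. u ^ n)"
    using ev_scale[of S y u "\<lambda>n. u ^ n"] by simp
  then show ?case using insert by (simp add: ev_insert algebra_simps)
qed simp

lemma ev_quad:
  assumes "finite S" "\<And>i. i \<in> S \<Longrightarrow> 0 \<le> y i"
  shows "ev S y (\<lambda>n. real n * (real n - 1)) \<le> (\<Sum>i\<in>S. y i) ^ 2"
  using assms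
proof (induction S rule: finite_induct)
  case (insert a S)
  have e: "ev S y (\<lambda>n. real (Suc n) * (real (Suc n) - 1)) = ev S y (\<lambda>n. real n * (real n - 1)) + 2 * ev S y real"
    using ev_lin[of S y 1 "\<lambda>n. real n * (real n - 1)" 2 real] by (simp add: algebra_simps)
  have IH: "ev S y (\<lambda>n. real n * (real n - 1)) \<le> (\<Sum>i\<in>S. y i) ^ 2" using insert by auto
  have ya: "0 \<le> y a" using insert by auto
  have mu: "0 \<le> (\<Sum>i\<in>S. y i)" using insert by (auto intro: sum_nonneg)
  have "ev (insert a S) y (\<lambda>n. real n * (real n - 1)) = ev S y (\<lambda>n. real n * (real n - 1)) + 2 * y a * (\<Sum>i\<in>S. y i)"
    using insert e ev_id[OF insert(1)] by (simp add: ev_insert algebra_simps)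
  also have "\<dots> \<le> (\<Sum>i\<in>S. y i) ^ 2 + 2 * y a * (\<Sum>i\<in>S. y i)" using IH by simp
  also have "\<dots> \<le> (\<Sum>i\<in>insert a S. y i) ^ 2" using insert ya mu by (simp add: power2_eq_square algebra_simps)
  finally show ?case .
qed simp

lemma ev_upd_single:
  assumes "finite S" "a \<in> S" "b \<notin> S"
  shows "ev S (y(a := u, b := w)) h = u * ev (S - {a}) y (\<lambda>n. h (Suc n)) + (1 - u) * ev (S - {a}) y h"
proof -
  have S: "S = insert a (S - {a})" using assms by auto
  have "ev S (y(a := u, b := w)) h = ev (insert a (S - {a})) (y(a := u, b := w)) h" using S by simp
  also have "\<dots> = u * ev (S - {a}) (y(a := u, b := w)) (\<lambda>n. h (Suc n)) + (1 - u) * ev (S - {a}) (y(a := u, b := w)) h"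
    using assms by (subst ev_insert) auto
  also have "ev (S - {a}) (y(a := u, b := w)) (\<lambda>n. h (Suc n)) = ev (S - {a}) y (\<lambda>n. h (Suc n))"
    using assms by (intro ev_cong) auto
  also have "ev (S - {a}) (y(a := u, b := w)) h = ev (S - {a}) y h"
    using assms by (intro ev_cong) auto
  finally show ?thesis .
qed

lemma ev_upd_pair:
  assumes "finite S" "a \<in> S" "b \<in> S" "a \<noteq> b"
  defines "R \<equiv> S - {a, b}"
  shows "ev S (y(a := u, b := v)) h = u * v * ev R y (\<lambda>n. h (Suc (Suc n)))
     + (u * (1 - v) + (1 - u) * v) * ev R y (\<lambda>n. h (Suc n)) + (1 - u) * (1 - v) * ev R y h"
proof -
  have S: "S = insert a (insert b R)" using assms by auto
  have fR: "finite R" "a \<notin> R" "b \<notin> R" using assms by auto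
  have c: "\<And>g. ev (S - {a, b}) (y(a := u, b := v)) g = ev (S - {a, b}) y g" using fR R_def by (intro ev_cong) auto
  have "ev S (y(a := u, b := v)) h = ev (insert a (insert b R)) (y(a := u, b := v)) h" using S by simp
  also have "\<dots> = u * (v * ev R (y(a := u, b := v)) (\<lambda>n. h (Suc (Suc n))) + (1 - v) * ev R (y(a := u, b := v)) (\<lambda>n. h (Suc n)))
      + (1 - u) * (v * ev R (y(a := u, b := v)) (\<lambda>n. h (Suc n)) + (1 - v) * ev R (y(a := u, b := v)) h)"
    using fR assms by (simp add: ev_insert)
  finally show ?thesis unfolding R_def c by (simp add: algebra_simps)
qed

definition TP :: "nat \<Rightarrow> ((nat \<Rightarrow> real) \<Rightarrow> real) \<Rightarrow> bool" where
  "TP m F \<longleftrightarrow> (\<forall>y a b p u1 u2. a < m \<longrightarrow> b < m \<longrightarrow> a \<noteq> b \<longrightarrow> (\<forall>i<m. 0 \<le> y i \<and> y i \<le> 1)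
     \<longrightarrow> 0 \<le> p \<longrightarrow> p \<le> 1 \<longrightarrow> p * u1 + (1 - p) * u2 = y a \<longrightarrow>
     p * F (y(a := u1, b := y a + y b - u1)) + (1 - p) * F (y(a := u2, b := y a + y b - u2)) \<le> F y)"

lemma TP_ev:
  assumes "finite S" "S \<subseteq> {..<m}" "\<And>n. 0 \<le> h (Suc (Suc n)) - 2 * h (Suc n) + h n"
  shows "TP m (\<lambda>y. ev S y h)"
  unfolding TP_def
proof (intro allI impI)
  fix y :: "nat \<Rightarrow> real" and a b p u1 u2
  assume ab: "a < m" "b < m" "a \<noteq> b" and y: "\<forall>i<m. 0 \<le> y i \<and> y i \<le> 1"
    and p: "0 \<le> p" "p \<le> 1" and mean: "p * u1 + (1 - p) * u2 = y a"
  define s where "s = y a + y b"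
  have yy: "y = y(a := y a, b := s - y a)" by (simp add: s_def)
  show "p * ev S (y(a := u1, b := y a + y b - u1)) h + (1 - p) * ev S (y(a := u2, b := y a + y b - u2)) h \<le> ev S y h"
  proof (cases "a \<in> S")
    case aS: True
    show ?thesis
    proof (cases "b \<in> S")
      case bS: True
      define R where "R = S - {a, b}"
      define E2 where "E2 = ev R y (\<lambda>n. h (Suc (Suc n)))"
      define E1 where "E1 = ev R y (\<lambda>n. h (Suc n))"
      define E0 where "E0 = ev R y h"
      have F: "ev S (y(a := u, b := s - u)) h = E0 * (1 - s) + s * E1 + u * (s - u) * (E2 - 2 * E1 + E0)" for u
        using ev_upd_pair[OF assms(1) aS bS ab(3), of y u "s - u" h] unfolding E2_def E1_def E0_def R_def
        by (simp add: algebra_simps)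
      have C: "0 \<le> E2 - 2 * E1 + E0"
      proof -
        have "0 \<le> ev R y (\<lambda>n. h (Suc (Suc n)) - 2 * h (Suc n) + h n)"
          using assms y R_def by (intro ev_nonneg) auto
        then show ?thesis unfolding E2_def E1_def E0_def
          using ev_lin[of R y 1 "\<lambda>n. h (Suc (Suc n))" "-2" "\<lambda>n. h (Suc n)"]
            ev_add[of R y "\<lambda>n. h (Suc (Suc n)) - 2 * h (Suc n)" h] by simp
      qed
      have key: "p * (u1 * (s - u1)) + (1 - p) * (u2 * (s - u2)) \<le> y a * (s - y a)"
      proof -
        have "y a * (s - y a) - (p * (u1 * (s - u1)) + (1 - p) * (u2 * (s - u2))) = p * (1 - p) * (u1 - u2)^2"
          unfolding mean[symmetric] by (simp add: power2_eq_square algebra_simps)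
        moreover have "0 \<le> p * (1 - p) * (u1 - u2)^2" using p by simp
        ultimately show ?thesis by linarith
      qed
      have "p * ev S (y(a := u1, b := s - u1)) h + (1 - p) * ev S (y(a := u2, b := s - u2)) h
          = E0 * (1 - s) + s * E1 + (p * (u1 * (s - u1)) + (1 - p) * (u2 * (s - u2))) * (E2 - 2 * E1 + E0)"
        unfolding F by (simp add: algebra_simps)
      also have "\<dots> \<le> E0 * (1 - s) + s * E1 + (y a * (s - y a)) * (E2 - 2 * E1 + E0)"
        using key C by (intro add_left_mono mult_right_mono) auto
      also have "\<dots> = ev S y h" using F[of "y a"] yy by simp
      finally show ?thesis unfolding s_def .
    next
      case bS: False
      have F: "\<And>u w. ev S (y(a := u, b := w)) h = u * ev (S - {a}) y (\<lambda>n. h (Suc n)) + (1 - u) * ev (S - {a}) y h"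
        using ev_upd_single[OF assms(1) aS bS] by simp
      have "p * ev S (y(a := u1, b := y a + y b - u1)) h + (1 - p) * ev S (y(a := u2, b := y a + y b - u2)) h
          = (p * u1 + (1 - p) * u2) * ev (S - {a}) y (\<lambda>n. h (Suc n)) + (1 - (p * u1 + (1 - p) * u2)) * ev (S - {a}) y h"
        unfolding F by (simp add: algebra_simps)
      also have "\<dots> = ev S (y(a := y a, b := y b)) h" unfolding F mean by simp
      finally show ?thesis by simp
    qed
  next
    case aS: False
    show ?thesis
    proof (cases "b \<in> S")
      case bS: True
      have F: "\<And>u w. ev S (y(a := u, b := w)) h = w * ev (S - {b}) y (\<lambda>n. h (Suc n)) + (1 - w) * ev (S - {b}) y h"
        using ev_upd_single[OF assms(1) bS aS] ab(3) by (simp add: fun_upd_twist)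
      have "p * ev S (y(a := u1, b := y a + y b - u1)) h + (1 - p) * ev S (y(a := u2, b := y a + y b - u2)) h
          = (y a + y b - (p * u1 + (1 - p) * u2)) * ev (S - {b}) y (\<lambda>n. h (Suc n)) + (1 - (y a + y b - (p * u1 + (1 - p) * u2))) * ev (S - {b}) y h"
        unfolding F by (simp add: algebra_simps)
      also have "\<dots> = ev S (y(a := y a, b := y b)) h" unfolding F mean by simp
      finally show ?thesis by simp
    next
      case bS: False
      have F: "\<And>u w. ev S (y(a := u, b := w)) h = ev S y h"
        using aS bS by (intro ev_cong) auto
      show ?thesis unfolding F by (simp add: algebra_simps)
    qed
  qed
qed



lemma exp_bind_le:
  fixes p :: "'a pmf" and f :: "'a \<Rightarrow> 'b pmf" and h :: "'b \<Rightarrow> real"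
  assumes "finite (set_pmf p)" "\<And>x. x \<in> set_pmf p \<Longrightarrow> finite (set_pmf (f x))"
    "\<And>x. x \<in> set_pmf p \<Longrightarrow> measure_pmf.expectation (f x) h \<le> g x"
  shows "measure_pmf.expectation (bind_pmf p f) h \<le> measure_pmf.expectation p g"
proof -
  have "measure_pmf.expectation (bind_pmf p f) h = (\<Sum>a\<in>set_pmf p. pmf p a *\<^sub>R measure_pmf.expectation (f a) h)"
    using assms by (intro pmf_expectation_bind) auto
  also have "\<dots> \<le> (\<Sum>a\<in>set_pmf p. pmf p a *\<^sub>R g a)"
    using assms by (intro sum_mono) (auto intro: mult_left_mono)
  also have "\<dots> = measure_pmf.expectation p g"
    using assms by (intro integral_measure_pmf[symmetric]) auto
  finally show ?thesis .
qed

lemma exp_mono_pmf: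
  fixes p :: "'a pmf" and f g :: "'a \<Rightarrow> real"
  assumes "finite (set_pmf p)" "\<And>x. x \<in> set_pmf p \<Longrightarrow> f x \<le> g x"
  shows "measure_pmf.expectation p f \<le> measure_pmf.expectation p g"
  using assms by (intro integral_mono_AE) (auto simp: AE_measure_pmf_iff intro: integrable_measure_pmf_finite)

lemma finite_pair_step: "finite (set_pmf (pair_step a b y))"
  unfolding pair_step_def Let_def by auto

lemma finite_combine: "finite (set_pmf (combine oa ob y))"
  unfolding combine_def by (auto split: option.split simp: finite_pair_step)

lemma finite_dep_round: "finite (set_pmf (dep_round T y))"
proof (induction T arbitrary: y)
  case (Leaf i) then show ?case by simp
next
  case (Node l r)
  show ?case using Node by (auto simp: finite_combine split: prod.splits)
qed

lemma pair_step_set: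
  assumes "(o', y') \<in> set_pmf (pair_step a b y)"
  shows "o' = promote a b y' \<and> (\<exists>u w. y' = y(a := u, b := w) \<and> u + w = y a + y b \<and>
     (if y a + y b \<le> 1 then (u = 0 \<or> w = 0) else (u = 1 \<or> w = 1)))"
proof (cases "y a + y b \<le> 1")
  case True
  then obtain coin where c: "(o', y') = (let y' = (if coin then y(a := y a + y b, b := 0) else y(a := 0, b := y a + y b))
                       in (promote a b y', y'))"
    using assms unfolding pair_step_def Let_def by (auto simp: Let_def)
  show ?thesis
  proof (cases coin)
    case True
    then show ?thesis using c \<open>y a + y b \<le> 1\<close> by (intro conjI exI[of _ "y a + y b"] exI[of _ 0]) (auto simp: Let_def)
  next
    case False
    then show ?thesis using c \<open>y a + y b \<le> 1\<close> by (intro conjI exI[of _ 0] exI[of _ "y a + y b"]) (auto simp: Let_def)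
  qed
next
  case False
  then obtain coin where c: "(o', y') = (let y' = (if coin then y(a := 1, b := y a + y b - 1) else y(a := y a + y b - 1, b := 1))
                       in (promote a b y', y'))"
    using assms unfolding pair_step_def Let_def by (auto simp: Let_def)
  show ?thesis
  proof (cases coin)
    case True
    then show ?thesis using c False by (intro conjI exI[of _ 1] exI[of _ "y a + y b - 1"]) (auto simp: Let_def)
  next
    case f2: False
    then show ?thesis using c False by (intro conjI exI[of _ "y a + y b - 1"] exI[of _ 1]) (auto simp: Let_def)
  qed
qed


definition good :: "nat \<Rightarrow> (nat \<Rightarrow> real) \<Rightarrow> bool" where
  "good m y \<longleftrightarrow> (\<forall>i<m. 0 \<le> y i \<and> y i \<le> 1)"

lemma pair_step_exp:
  assumes TP: "TP m F" and ab: "a < m" "b < m" "a \<noteq> b" and g: "good m y"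
  shows "measure_pmf.expectation (pair_step a b y) (\<lambda>x. F (snd x)) \<le> F y"
proof -
  have ya: "0 \<le> y a" "y a \<le> 1" and yb: "0 \<le> y b" "y b \<le> 1" using g ab unfolding good_def by auto
  have TP': "\<And>p u1 u2. 0 \<le> p \<Longrightarrow> p \<le> 1 \<Longrightarrow> p * u1 + (1 - p) * u2 = y a \<Longrightarrow>
     p * F (y(a := u1, b := y a + y b - u1)) + (1 - p) * F (y(a := u2, b := y a + y b - u2)) \<le> F y"
    using TP ab g unfolding TP_def good_def by blast
  define s where "s = y a + y b"
  show ?thesis
  proof (cases "s \<le> 1")
    case True
    define p where "p = y a / s"
    have p: "0 \<le> p" "p \<le> 1" unfolding p_def s_def using ya yb by (auto simp: divide_le_eq)
    have mean: "p * s + (1 - p) * 0 = y a"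
    proof (cases "s = 0")
      case True then show ?thesis using ya yb s_def by auto
    next
      case False then show ?thesis unfolding p_def by simp
    qed
    have "measure_pmf.expectation (pair_step a b y) (\<lambda>x. F (snd x))
        = p * F (y(a := s, b := y a + y b - s)) + (1 - p) * F (y(a := 0, b := y a + y b - 0))"
      unfolding pair_step_def Let_def s_def[symmetric] p_def[symmetric] using True p
      by (simp add: s_def algebra_simps)
    also have "\<dots> \<le> F y" using TP'[OF p mean] .
    finally show ?thesis .
  next
    case False
    define p where "p = (1 - y b) / (2 - s)"
    have p: "0 \<le> p" "p \<le> 1" unfolding p_def s_def using ya yb by (auto simp: divide_le_eq)
    have mean: "p * 1 + (1 - p) * (s - 1) = y a"
    proof (cases "s = 2")
      case True then show ?thesis using ya yb s_def p_def by auto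
    next
      case False then have "2 - s \<noteq> 0" by simp
      then have "p * (2 - s) = 1 - y b" unfolding p_def by simp
      moreover have "p * 1 + (1 - p) * (s - 1) = s - 1 + p * (2 - s)" by (simp add: algebra_simps)
      ultimately show ?thesis unfolding s_def by simp
    qed
    have "measure_pmf.expectation (pair_step a b y) (\<lambda>x. F (snd x))
        = p * F (y(a := 1, b := y a + y b - 1)) + (1 - p) * F (y(a := s - 1, b := y a + y b - (s - 1)))"
      unfolding pair_step_def Let_def s_def[symmetric] p_def[symmetric] using False p
      by (simp add: s_def algebra_simps)
    also have "\<dots> \<le> F y" using TP'[OF p mean] .
    finally show ?thesis .
  qed
qed


definition inv_out :: "nat \<Rightarrow> nat set \<Rightarrow> (nat \<Rightarrow> real) \<Rightarrow> (nat option \<times> (nat \<Rightarrow> real)) \<Rightarrow> bool" where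
  "inv_out m L y x \<longleftrightarrow> good m (snd x) \<and> (\<forall>i. i \<notin> L \<longrightarrow> snd x i = y i) \<and>
     (\<Sum>i\<in>L. snd x i) = (\<Sum>i\<in>L. y i) \<and>
     (case fst x of None \<Rightarrow> (\<forall>i\<in>L. snd x i = 0 \<or> snd x i = 1)
        | Some a \<Rightarrow> a \<in> L \<and> frac (snd x a) \<and> (\<forall>i\<in>L. i \<noteq> a \<longrightarrow> snd x i = 0 \<or> snd x i = 1))"

lemma not_frac01: "0 \<le> v \<Longrightarrow> v \<le> 1 \<Longrightarrow> \<not> frac v \<Longrightarrow> v = 0 \<or> v = 1"
  unfolding frac_def by auto

lemma sum_upd2:
  fixes y :: "nat \<Rightarrow> real"
  assumes "finite L" "a \<in> L" "b \<in> L" "a \<noteq> b"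
  shows "(\<Sum>i\<in>L. (y(a := u, b := w)) i) = (\<Sum>i\<in>L. y i) + (u - y a) + (w - y b)"
proof -
  have e: "\<And>i. (y(a := u, b := w)) i = y i + (if i = a then u - y a else 0) + (if i = b then w - y b else 0)"
    using assms by (auto simp: algebra_simps)
  show ?thesis unfolding e using assms by (simp add: sum.distrib)
qed

lemma combine_inv:
  assumes disj: "Ll \<inter> Lr = {}" and fin: "finite Ll" "finite Lr" and sub: "Ll \<union> Lr \<subseteq> {..<m}"
    and il: "inv_out m Ll y (a, y1)" and ir: "inv_out m Lr y1 (b, y2)"
    and x: "x \<in> set_pmf (combine a b y2)"
  shows "inv_out m (Ll \<union> Lr) y x"
proof -
  have g2: "good m y2" using ir unfolding inv_out_def by simp
  have out: "\<forall>i. i \<notin> Ll \<union> Lr \<longrightarrow> y2 i = y i" using il ir unfolding inv_out_def by auto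
  have y21: "\<And>i. i \<in> Ll \<Longrightarrow> y2 i = y1 i" using ir disj unfolding inv_out_def by auto
  have y1y: "\<And>i. i \<in> Lr \<Longrightarrow> y1 i = y i" using il disj unfolding inv_out_def by auto
  have sum2: "(\<Sum>i\<in>Ll \<union> Lr. y2 i) = (\<Sum>i\<in>Ll \<union> Lr. y i)"
  proof -
    have "(\<Sum>i\<in>Ll \<union> Lr. y2 i) = (\<Sum>i\<in>Ll. y2 i) + (\<Sum>i\<in>Lr. y2 i)" using fin disj by (simp add: sum.union_disjoint)
    also have "(\<Sum>i\<in>Ll. y2 i) = (\<Sum>i\<in>Ll. y1 i)" using y21 by simp
    also have "\<dots> = (\<Sum>i\<in>Ll. y i)" using il unfolding inv_out_def by simp
    also have "(\<Sum>i\<in>Lr. y2 i) = (\<Sum>i\<in>Lr. y1 i)" using ir unfolding inv_out_def by simp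
    also have "\<dots> = (\<Sum>i\<in>Lr. y i)" using y1y by simp
    finally show ?thesis using fin disj by (simp add: sum.union_disjoint)
  qed
  have left01: "\<And>i. i \<in> Ll \<Longrightarrow> (case a of None \<Rightarrow> True | Some a' \<Rightarrow> i \<noteq> a') \<Longrightarrow> y2 i = 0 \<or> y2 i = 1"
    using il y21 unfolding inv_out_def by (auto split: option.splits)
  have right01: "\<And>i. i \<in> Lr \<Longrightarrow> (case b of None \<Rightarrow> True | Some b' \<Rightarrow> i \<noteq> b') \<Longrightarrow> y2 i = 0 \<or> y2 i = 1"
    using ir unfolding inv_out_def by (auto split: option.splits)
  show ?thesis
  proof (cases a)
    case None
    then have xx: "x = (b, y2)" using x unfolding combine_def by auto
    show ?thesis unfolding xx inv_out_def using g2 out sum2 left01 right01 None ir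
      unfolding inv_out_def by (auto split: option.splits)
  next
    case (Some a')
    have a': "a' \<in> Ll" "frac (y2 a')" using il Some y21 unfolding inv_out_def by auto
    show ?thesis
    proof (cases b)
      case None
      then have xx: "x = (Some a', y2)" using x Some unfolding combine_def by auto
      show ?thesis unfolding xx inv_out_def using g2 out sum2 left01 right01 None Some a'
        by (auto split: option.splits)
    next
      case (Some b')
      have b': "b' \<in> Lr" "frac (y2 b')" using ir Some unfolding inv_out_def by auto
      have ab: "a' \<noteq> b'" using a' b' disj by auto
      have xp: "x \<in> set_pmf (pair_step a' b' y2)" using x \<open>a = Some a'\<close> Some unfolding combine_def by auto
      obtain o' y3 where xo: "x = (o', y3)" by (cases x)
      from pair_step_set[OF xp[unfolded xo]] obtain u w where
        o: "o' = promote a' b' y3" and y3: "y3 = y2(a' := u, b' := w)" and uw: "u + w = y2 a' + y2 b'"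
        and c: "if y2 a' + y2 b' \<le> 1 then (u = 0 \<or> w = 0) else (u = 1 \<or> w = 1)" by blast
      have fa: "0 < y2 a'" "y2 a' < 1" using a' unfolding frac_def by auto
      have fb: "0 < y2 b'" "y2 b' < 1" using b' unfolding frac_def by auto
      have u01: "0 \<le> u \<and> u \<le> 1" and w01: "0 \<le> w \<and> w \<le> 1" and one01: "u = 0 \<or> u = 1 \<or> w = 0 \<or> w = 1"
        using c uw fa fb by (auto split: if_splits)
      have abm: "a' < m" "b' < m" using a' b' sub by auto
      have g3: "good m y3" using g2 u01 w01 unfolding y3 good_def by auto
      have out3: "\<forall>i. i \<notin> Ll \<union> Lr \<longrightarrow> y3 i = y i" using out a' b' unfolding y3 by auto
      have sum3: "(\<Sum>i\<in>Ll \<union> Lr. y3 i) = (\<Sum>i\<in>Ll \<union> Lr. y i)"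
        unfolding y3 using sum_upd2[of "Ll \<union> Lr" a' b' y2 u w] fin a' b' ab sum2 uw by simp
      have rest: "\<And>i. i \<in> Ll \<union> Lr \<Longrightarrow> i \<noteq> a' \<Longrightarrow> i \<noteq> b' \<Longrightarrow> y3 i = 0 \<or> y3 i = 1"
        using left01 right01 \<open>a = Some a'\<close> Some unfolding y3 by auto
      have y3a: "y3 a' = u" and y3b: "y3 b' = w" unfolding y3 using ab by auto
      show ?thesis
      proof (cases "frac u")
        case True
        then have "w = 0 \<or> w = 1" using one01 unfolding frac_def by auto
        then show ?thesis unfolding xo inv_out_def using True g3 out3 sum3 rest a'(1) o y3a y3b
          by (auto simp: promote_def)
      next
        case nu: False
        have u': "u = 0 \<or> u = 1" using nu u01 not_frac01 by auto
        show ?thesis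
        proof (cases "frac w")
          case True
          then show ?thesis unfolding xo inv_out_def using True nu u' g3 out3 sum3 rest b'(1) o y3a y3b
            by (auto simp: promote_def)
        next
          case False
          have w': "w = 0 \<or> w = 1" using False w01 not_frac01 by auto
          then show ?thesis unfolding xo inv_out_def using False nu u' g3 out3 sum3 rest o y3a y3b a'(1) b'(1)
            by (auto simp: promote_def)
        qed
      qed
    qed
  qed
qed


lemma dep_round_inv:
  assumes "distinct (leaves T)" "set (leaves T) \<subseteq> {..<m}" "good m y" "x \<in> set_pmf (dep_round T y)"
  shows "inv_out m (set (leaves T)) y x"
  using assms
proof (induction T arbitrary: y x)
  case (Leaf i)
  have x: "x = (if frac (y i) then Some i else None, y)" using Leaf by simp
  have "0 \<le> y i" "y i \<le> 1" using Leaf unfolding good_def by auto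
  then show ?case unfolding x inv_out_def using Leaf not_frac01 by auto
next
  case (Node l r)
  from Node.prems(4) obtain a y1 b y2 where
    x1: "(a, y1) \<in> set_pmf (dep_round l y)" and x2: "(b, y2) \<in> set_pmf (dep_round r y1)"
    and x3: "x \<in> set_pmf (combine a b y2)"
    by (auto split: prod.splits)
  have dl: "distinct (leaves l)" "set (leaves l) \<subseteq> {..<m}" and dr: "distinct (leaves r)" "set (leaves r) \<subseteq> {..<m}"
    and disj: "set (leaves l) \<inter> set (leaves r) = {}" using Node.prems by auto
  have il: "inv_out m (set (leaves l)) y (a, y1)" using Node.IH(1)[OF dl Node.prems(3) x1] .
  have g1: "good m y1" using il unfolding inv_out_def by simp
  have ir: "inv_out m (set (leaves r)) y1 (b, y2)" using Node.IH(2)[OF dr g1 x2] .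
  show ?case using combine_inv[OF disj _ _ _ il ir x3] Node.prems by auto
qed

lemma combine_exp:
  assumes TP: "TP m F" and g: "good m y"
    and ab: "\<And>a' b'. oa = Some a' \<Longrightarrow> ob = Some b' \<Longrightarrow> a' < m \<and> b' < m \<and> a' \<noteq> b'"
  shows "measure_pmf.expectation (combine oa ob y) (\<lambda>x. F (snd x)) \<le> F y"
proof (cases oa)
  case None then show ?thesis unfolding combine_def by simp
next
  case (Some a')
  show ?thesis
  proof (cases ob)
    case None then show ?thesis using Some unfolding combine_def by simp
  next
    case (Some b')
    then show ?thesis using \<open>oa = Some a'\<close> ab[of a' b'] pair_step_exp[OF TP _ _ _ g] unfolding combine_def by auto
  qed
qed

lemma dep_round_exp:
  assumes "TP m F" "distinct (leaves T)" "set (leaves T) \<subseteq> {..<m}" "good m y"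
  shows "measure_pmf.expectation (dep_round T y) (\<lambda>x. F (snd x)) \<le> F y"
  using assms(2-4)
proof (induction T arbitrary: y)
  case (Leaf i) then show ?case by simp
next
  case (Node l r)
  have dl: "distinct (leaves l)" "set (leaves l) \<subseteq> {..<m}" and dr: "distinct (leaves r)" "set (leaves r) \<subseteq> {..<m}"
    and disj: "set (leaves l) \<inter> set (leaves r) = {}" using Node.prems by auto
  have "measure_pmf.expectation (dep_round (Node l r) y) (\<lambda>x. F (snd x))
      \<le> measure_pmf.expectation (dep_round l y) (\<lambda>x. F (snd x))"
    unfolding dep_round.simps
  proof (rule exp_bind_le[OF finite_dep_round])
    fix x assume x: "x \<in> set_pmf (dep_round l y)"
    obtain a y1 where xx: "x = (a, y1)" by (cases x)
    show "finite (set_pmf (case x of (a, y1) \<Rightarrow> dep_round r y1 \<bind> (\<lambda>(b, y2). combine a b y2)))"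
      unfolding xx using finite_dep_round finite_combine by (auto split: prod.splits)
    have il: "inv_out m (set (leaves l)) y (a, y1)" using dep_round_inv[OF dl Node.prems(3)] x xx by simp
    have g1: "good m y1" using il unfolding inv_out_def by simp
    have "measure_pmf.expectation (dep_round r y1 \<bind> (\<lambda>(b, y2). combine a b y2)) (\<lambda>x. F (snd x))
        \<le> measure_pmf.expectation (dep_round r y1) (\<lambda>x. F (snd x))"
    proof (rule exp_bind_le[OF finite_dep_round])
      fix x' assume x': "x' \<in> set_pmf (dep_round r y1)"
      obtain b y2 where xx': "x' = (b, y2)" by (cases x')
      show "finite (set_pmf (case x' of (b, y2) \<Rightarrow> combine a b y2))" unfolding xx' by (simp add: finite_combine)
      have ir: "inv_out m (set (leaves r)) y1 (b, y2)" using dep_round_inv[OF dr g1] x' xx' by simp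
      have g2: "good m y2" using ir unfolding inv_out_def by simp
      have "measure_pmf.expectation (combine a b y2) (\<lambda>x. F (snd x)) \<le> F y2"
      proof (rule combine_exp[OF assms(1) g2])
        fix a' b' assume "a = Some a'" "b = Some b'"
        then have "a' \<in> set (leaves l)" "b' \<in> set (leaves r)" using il ir unfolding inv_out_def by auto
        then show "a' < m \<and> b' < m \<and> a' \<noteq> b'" using dl dr disj by auto
      qed
      then show "measure_pmf.expectation (case x' of (b, y2) \<Rightarrow> combine a b y2) (\<lambda>x. F (snd x)) \<le> F (snd x')"
        unfolding xx' by simp
    qed
    also have "\<dots> \<le> F y1" using Node.IH(2)[OF dr g1] .
    finally show "measure_pmf.expectation (case x of (a, y1) \<Rightarrow> dep_round r y1 \<bind> (\<lambda>(b, y2). combine a b y2)) (\<lambda>x. F (snd x))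
        \<le> F (snd x)" unfolding xx by simp
  qed
  also have "\<dots> \<le> F y" using Node.IH(1)[OF dl Node.prems(3)] .
  finally show ?case .
qed


lemma sum01:
  fixes Y :: "nat \<Rightarrow> real"
  assumes "finite L" "\<And>i. i \<in> L \<Longrightarrow> Y i = 0 \<or> Y i = 1"
  shows "(\<Sum>i\<in>L. Y i) = real (card {i\<in>L. Y i = 1})"
proof -
  have "(\<Sum>i\<in>L. Y i) = (\<Sum>i\<in>L. if Y i = 1 then 1 else 0)"
    using assms by (intro sum.cong) auto
  also have "\<dots> = real (card {i\<in>L. Y i = 1})"
    using assms by (simp add: sum.If_cases Int_def conj_commute)
  finally show ?thesis .
qed

lemma finite_rounded: "finite (set_pmf (rounded T y))"
  unfolding rounded_def by (simp add: finite_dep_round)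

lemma rounded_final:
  assumes "distinct (leaves T)" "set (leaves T) = {..<m}" "good m y" "(\<Sum>i<m. y i) = real k"
    "Y \<in> set_pmf (rounded T y)"
  shows "good m Y \<and> (\<forall>i<m. Y i = 0 \<or> Y i = 1) \<and> card {i. i < m \<and> Y i = 1} = k"
proof -
  obtain x where x: "x \<in> set_pmf (dep_round T y)" "Y = snd x" using assms(5) unfolding rounded_def by auto
  have iv: "inv_out m {..<m} y x" using dep_round_inv[OF assms(1) _ assms(3) x(1)] assms(2) by simp
  have g: "good m Y" and sY: "(\<Sum>i<m. Y i) = real k" using iv x assms(4) unfolding inv_out_def by auto
  have all01: "\<forall>i<m. Y i = 0 \<or> Y i = 1"
  proof (cases "fst x")
    case None then show ?thesis using iv x unfolding inv_out_def by auto
  next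
    case (Some a)
    have a: "a < m" "0 < Y a" "Y a < 1" and oth: "\<And>i. i < m \<Longrightarrow> i \<noteq> a \<Longrightarrow> Y i = 0 \<or> Y i = 1"
      using iv x Some unfolding inv_out_def frac_def by auto
    have "(\<Sum>i<m. Y i) = Y a + (\<Sum>i\<in>{..<m} - {a}. Y i)" using a by (simp add: sum.remove)
    also have "(\<Sum>i\<in>{..<m} - {a}. Y i) = real (card {i\<in>{..<m} - {a}. Y i = 1})"
      using oth by (intro sum01) auto
    finally have "Y a = real k - real (card {i\<in>{..<m} - {a}. Y i = 1})" using sY by simp
    then have "Y a = of_int (int k - int (card {i\<in>{..<m} - {a}. Y i = 1}))" by simp
    then obtain z :: int where "Y a = of_int z" by blast
    with a have "0 < z" "z < 1" by auto
    then show ?thesis by simp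
  qed
  have "real (card {i\<in>{..<m}. Y i = 1}) = real k" using sum01[of "{..<m}" Y] all01 sY by auto
  then have "card {i\<in>{..<m}. Y i = 1} = k" by simp
  moreover have "{i\<in>{..<m}. Y i = 1} = {i. i < m \<and> Y i = 1}" by auto
  ultimately show ?thesis using g all01 by simp
qed

lemma rounded_exp:
  assumes "TP m F" "distinct (leaves T)" "set (leaves T) \<subseteq> {..<m}" "good m y"
  shows "measure_pmf.expectation (rounded T y) F \<le> F y"
  using dep_round_exp[OF assms] unfolding rounded_def by simp



lemma test: "harm (3::nat) = (11/6::real)"
  by (simp add: harm_def eval_nat_numeral)

lemma hoeff_step:
  assumes "finite S" "a \<in> S" "b \<in> S" "a \<noteq> b"
    and conc: "\<And>n. h (Suc (Suc n)) - 2 * h (Suc n) + h n \<le> 0"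
    and y: "\<And>i. i \<in> S \<Longrightarrow> 0 \<le> y i \<and> y i \<le> 1"
    and ord: "y b \<le> q" "q \<le> y a"
  shows "ev S (y(a := q, b := y a + y b - q)) h \<le> ev S y h"
proof -
  define R where "R = S - {a, b}"
  define E2 where "E2 = ev R y (\<lambda>n. h (Suc (Suc n)))"
  define E1 where "E1 = ev R y (\<lambda>n. h (Suc n))"
  define E0 where "E0 = ev R y h"
  define s where "s = y a + y b"
  have F: "ev S (y(a := u, b := s - u)) h = E0 * (1 - s) + s * E1 + u * (s - u) * (E2 - 2 * E1 + E0)" for u
    using ev_upd_pair[OF assms(1-4), of y u "s - u" h] unfolding E2_def E1_def E0_def R_def
    by (simp add: algebra_simps)
  have C: "E2 - 2 * E1 + E0 \<le> 0"
  proof -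
    have cc: "0 \<le> - (h (Suc (Suc n)) - 2 * h (Suc n) + h n)" for n using conc[of n] by linarith
    have "0 \<le> ev R y (\<lambda>n. - (h (Suc (Suc n)) - 2 * h (Suc n) + h n))"
      using y R_def cc by (intro ev_nonneg) auto
    then show ?thesis unfolding E2_def E1_def E0_def
      using ev_lin[of R y "-1" "\<lambda>n. h (Suc (Suc n))" "2" "\<lambda>n. h (Suc n)"]
        ev_diff[of R y "\<lambda>n. - h (Suc (Suc n)) + 2 * h (Suc n)" h] by simp
  qed
  have key: "y a * (s - y a) \<le> q * (s - q)"
  proof -
    have "q * (s - q) - y a * (s - y a) = (y a - q) * (q - y b)" unfolding s_def by (simp add: algebra_simps)
    moreover have "0 \<le> (y a - q) * (q - y b)" using ord by simp
    ultimately show ?thesis by linarith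
  qed
  have "ev S (y(a := q, b := s - q)) h \<le> ev S (y(a := y a, b := s - y a)) h"
    unfolding F using key C by (intro add_left_mono mult_right_mono_neg) auto
  moreover have "y(a := y a, b := s - y a) = y" by (simp add: s_def)
  ultimately show ?thesis by (simp add: s_def)
qed


lemma hoeff_aux:
  fixes q :: real and h :: "nat \<Rightarrow> real"
  assumes "finite S"
    and conc: "\<And>n. h (Suc (Suc n)) - 2 * h (Suc n) + h n \<le> 0"
  shows "\<forall>y. (\<Sum>i\<in>S. y i) = q * card S \<longrightarrow> (\<forall>i\<in>S. 0 \<le> y i \<and> y i \<le> 1) \<longrightarrow>
      card {i\<in>S. y i \<noteq> q} = d \<longrightarrow> ev S (\<lambda>_. q) h \<le> ev S y h"
proof (induction d rule: less_induct)
  case (less d)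
  show ?case
  proof (intro allI impI)
    fix y assume sy: "(\<Sum>i\<in>S. y i) = q * card S" and y: "\<forall>i\<in>S. 0 \<le> y i \<and> y i \<le> 1"
      and d: "card {i\<in>S. y i \<noteq> q} = d"
    show "ev S (\<lambda>_. q) h \<le> ev S y h"
    proof (cases "d = 0")
      case True
      then have "{i\<in>S. y i \<noteq> q} = {}" using d assms(1) by simp
      then have "\<And>i. i \<in> S \<Longrightarrow> y i = q" by auto
      then have "ev S y h = ev S (\<lambda>_. q) h" by (intro ev_cong) auto
      then show ?thesis by simp
    next
      case False
      then obtain i0 where i0: "i0 \<in> S" "y i0 \<noteq> q" using d by (metis (mono_tags, lifting) Collect_empty_eq card.empty)
      have sq: "(\<Sum>i\<in>S. q - y i) = 0" using sy by (simp add: sum_subtractf mult.commute)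
      obtain a where a: "a \<in> S" "q < y a"
      proof (rule ccontr)
        assume "\<not> thesis"
        then have "\<forall>i\<in>S. y i \<le> q" using that by force
        then have "\<forall>i\<in>S. q - y i = 0" using sq assms(1) sum_nonneg_eq_0_iff[of S "\<lambda>i. q - y i"] by auto
        then show False using i0 by auto
      qed
      obtain b where b: "b \<in> S" "y b < q"
      proof (rule ccontr)
        assume "\<not> thesis"
        then have "\<forall>i\<in>S. q \<le> y i" using that by force
        then have "\<forall>i\<in>S. y i - q = 0" using sq assms(1) sum_nonneg_eq_0_iff[of S "\<lambda>i. y i - q"]
          by (auto simp: sum_subtractf sy)
        then show False using i0 by auto
      qed
      have ab: "a \<noteq> b" using a b by auto
      define y' where "y' = y(a := q, b := y a + y b - q)"
      have sy': "(\<Sum>i\<in>S. y' i) = q * card S"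
        unfolding y'_def using sum_upd2[OF assms(1) a(1) b(1) ab, of y q "y a + y b - q"] sy by simp
      have y': "\<forall>i\<in>S. 0 \<le> y' i \<and> y' i \<le> 1" using y a b ab unfolding y'_def by auto
      have sub: "{i\<in>S. y' i \<noteq> q} \<subseteq> {i\<in>S. y i \<noteq> q} - {a}" unfolding y'_def using a b ab by auto
      have lt: "card {i\<in>S. y' i \<noteq> q} < d"
      proof -
        have "card {i\<in>S. y' i \<noteq> q} \<le> card ({i\<in>S. y i \<noteq> q} - {a})" using sub assms(1) by (intro card_mono) auto
        also have "\<dots> < card {i\<in>S. y i \<noteq> q}" using a assms(1) by (intro card_Diff1_less) auto
        finally show ?thesis using d by simp
      qed
      have "ev S (\<lambda>_. q) h \<le> ev S y' h" using less.IH[OF lt] sy' y' by blast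
      also have "\<dots> \<le> ev S y h" unfolding y'_def
        using hoeff_step[of S a b h y q] assms(1) a(1) b(1) ab conc y a b by auto
      finally show ?thesis .
    qed
  qed
qed

lemma hoeff:
  fixes h :: "nat \<Rightarrow> real"
  assumes "finite S" "S \<noteq> {}" "\<And>n. h (Suc (Suc n)) - 2 * h (Suc n) + h n \<le> 0"
    "\<And>i. i \<in> S \<Longrightarrow> 0 \<le> y i \<and> y i \<le> 1"
  shows "ev S (\<lambda>_. (\<Sum>i\<in>S. y i) / card S) h \<le> ev S y h"
proof -
  have "card S > 0" using assms by (simp add: card_gt_0_iff)
  then have "(\<Sum>i\<in>S. y i) = ((\<Sum>i\<in>S. y i) / card S) * card S" by simp
  then show ?thesis using hoeff_aux[of S h "(\<Sum>i\<in>S. y i) / card S"] assms by blast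
qed


definition eN :: "nat \<Rightarrow> real \<Rightarrow> (nat \<Rightarrow> real) \<Rightarrow> real" where
  "eN N p h = ev {..<N} (\<lambda>_. p) h"

lemma eN_0[simp]: "eN 0 p h = h 0" by (simp add: eN_def)

lemma eN_Suc: "eN (Suc N) p h = p * eN N p (\<lambda>n. h (Suc n)) + (1 - p) * eN N p h"
  unfolding eN_def lessThan_Suc by (subst ev_insert) auto

lemma ev_const_eN: "finite S \<Longrightarrow> ev S (\<lambda>_. p) h = eN (card S) p h"
proof (induction S arbitrary: h rule: finite_induct)
  case (insert a S) then show ?case by (simp add: ev_insert eN_Suc)
qed simp

lemma eN_lin: "eN N p (\<lambda>n. a * f n + b * g n) = a * eN N p f + b * eN N p g"
  unfolding eN_def by (rule ev_lin)

lemma size_bias: "eN (Suc N) p (\<lambda>n. real n * g n) = real (Suc N) * p * eN N p (\<lambda>n. g (Suc n))"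
proof (induction N arbitrary: g)
  case 0
  then show ?case by (simp add: eN_Suc)
next
  case (Suc N)
  have e1: "eN (Suc N) p (\<lambda>n. real (Suc n) * g (Suc n)) = eN (Suc N) p (\<lambda>n. g (Suc n)) + eN (Suc N) p (\<lambda>n. real n * g (Suc n))"
    using eN_lin[of "Suc N" p 1 "\<lambda>n. g (Suc n)" 1 "\<lambda>n. real n * g (Suc n)"] by (simp add: algebra_simps)
  have "eN (Suc (Suc N)) p (\<lambda>n. real n * g n)
      = p * eN (Suc N) p (\<lambda>n. real (Suc n) * g (Suc n)) + (1 - p) * eN (Suc N) p (\<lambda>n. real n * g n)"
    by (simp add: eN_Suc)
  also have "\<dots> = p * eN (Suc N) p (\<lambda>n. g (Suc n)) + real (Suc N) * p * (p * eN N p (\<lambda>n. g (Suc (Suc n))) + (1 - p) * eN N p (\<lambda>n. g (Suc n)))"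
    unfolding e1 Suc.IH[of "\<lambda>n. g (Suc n)"] Suc.IH[of g] by (simp add: algebra_simps)
  also have "\<dots> = real (Suc (Suc N)) * p * eN (Suc N) p (\<lambda>n. g (Suc n))"
    by (simp add: eN_Suc algebra_simps)
  finally show ?case .
qed

lemma eN_pow0: "eN N p (\<lambda>n. (0::real) ^ n) = (1 - p) ^ N"
  unfolding eN_def by (simp add: ev_pow)

lemma eN_inv: "real (Suc N) * p * eN N p (\<lambda>n. 1 / real (Suc n)) = 1 - (1 - p) ^ Suc N"
proof -
  have "eN (Suc N) p (\<lambda>n. real n * (1 / real n)) = eN (Suc N) p (\<lambda>n. 1 - (0::real) ^ n)"
    unfolding eN_def by (intro arg_cong[where f = "ev _ _"]) (auto simp: fun_eq_iff)
  also have "\<dots> = 1 - (1 - p) ^ Suc N"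
    using eN_lin[of "Suc N" p 1 "\<lambda>_. 1" "-1" "\<lambda>n. (0::real) ^ n"] eN_pow0[of "Suc N" p]
    by (simp add: eN_def ev_const)
  finally show ?thesis using size_bias[of N p "\<lambda>n. 1 / real n"] by simp
qed

lemma eN_harm:
  assumes "0 < p"
  shows "eN N p harm = (\<Sum>i\<in>{1..N}. (1 - (1 - p) ^ i) / real i)"
proof (induction N)
  case 0 then show ?case by (simp add: harm_def)
next
  case (Suc N)
  have h: "(\<lambda>n. harm (Suc n) :: real) = (\<lambda>n. 1 * harm n + 1 * (1 / real (Suc n)))"
    by (simp add: harm_Suc fun_eq_iff inverse_eq_divide)
  have "eN (Suc N) p harm = p * eN N p (\<lambda>n. harm (Suc n)) + (1 - p) * eN N p harm" by (simp add: eN_Suc)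
  also have "\<dots> = eN N p harm + p * eN N p (\<lambda>n. 1 / real (Suc n))"
    unfolding h eN_lin by (simp add: algebra_simps)
  also have "p * eN N p (\<lambda>n. 1 / real (Suc n)) = (1 - (1 - p) ^ Suc N) / real (Suc N)"
    using eN_inv[of N p] by (simp add: field_simps)
  finally show ?case using Suc by simp
qed


lemma log_partial:
  fixes t :: real
  assumes "0 \<le> t" "t < 1"
  shows "(\<Sum>i\<in>{1..N}. t ^ i / real i) \<le> - ln (1 - t)"
proof -
  have s: "(\<lambda>n. t ^ n / real n) sums (- ln (1 - t))"
    using sums_minus[OF ln_series'[of "-t"]] assms by simp
  have "(\<Sum>i\<in>{1..N}. t ^ i / real i) = (\<Sum>i<Suc N. t ^ i / real i)"
    by (rule sum.mono_neutral_left) (auto simp: atLeast1_atMost_eq_remove0)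
  also have "\<dots> \<le> - ln (1 - t)"
    using s assms by (intro sum_le_suminf[OF sums_summable[OF s], THEN order_trans]) (auto simp: sums_unique[OF s])
  finally show ?thesis .
qed

lemma binom_harm_lower:
  assumes "0 < p" "p \<le> 1"
  shows "harm N + ln p \<le> (\<Sum>i\<in>{1..N}. (1 - (1 - p) ^ i) / real i)"
proof -
  have "(\<Sum>i\<in>{1..N}. (1 - (1 - p) ^ i) / real i) = harm N - (\<Sum>i\<in>{1..N}. (1 - p) ^ i / real i)"
    by (simp add: harm_def diff_divide_distrib sum_subtractf inverse_eq_divide)
  moreover have "(\<Sum>i\<in>{1..N}. (1 - p) ^ i / real i) \<le> - ln (1 - (1 - p))"
    using assms by (intro log_partial) auto
  ultimately show ?thesis by simp
qed

lemma harm_concave: "harm (Suc (Suc n)) - 2 * harm (Suc n) + harm n \<le> (0::real)"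
proof -
  have a: "harm (Suc n) = harm n + 1 / (real n + 1)" by (simp add: harm_Suc inverse_eq_divide add.commute)
  have b: "harm (Suc (Suc n)) = harm n + 1 / (real n + 1) + 1 / (real n + 2)"
    by (simp add: harm_Suc inverse_eq_divide add.commute add.left_commute)
  have "1 / (real n + 2) \<le> 1 / (real n + 1)" by (intro divide_left_mono) auto
  then show ?thesis unfolding a b by simp
qed

lemma psi_lower:
  assumes "finite S" "S \<noteq> {}" "\<And>i. i \<in> S \<Longrightarrow> 0 \<le> y i \<and> y i \<le> 1" "0 < (\<Sum>i\<in>S. y i)"
  shows "harm (card S) + ln ((\<Sum>i\<in>S. y i) / card S) \<le> ev S y harm"
proof -
  define p where "p = (\<Sum>i\<in>S. y i) / card S"
  have N: "0 < card S" using assms by (simp add: card_gt_0_iff)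
  have "(\<Sum>i\<in>S. y i) \<le> (\<Sum>i\<in>S. 1)" using assms by (intro sum_mono) auto
  then have p: "0 < p" "p \<le> 1" using N assms unfolding p_def by (auto simp: divide_le_eq)
  have "harm (card S) + ln p \<le> eN (card S) p harm" using eN_harm[OF p(1)] binom_harm_lower[OF p] by simp
  also have "\<dots> = ev S (\<lambda>_. p) harm" using ev_const_eN[OF assms(1)] by simp
  also have "\<dots> \<le> ev S y harm" unfolding p_def using hoeff[of S harm y] assms harm_concave by blast
  finally show ?thesis unfolding p_def .
qed


lemma harm_ln_inc: "m \<le> n \<Longrightarrow> harm m - ln (real m + 1) \<le> harm n - ln (real n + 1)"
proof (induction n)
  case 0 then show ?case by simp
next
  case (Suc n)
  have step: "harm n - ln (real n + 1) \<le> harm (Suc n) - ln (real (Suc n) + 1)"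
  proof -
    have e: "1 + 1 / (real n + 1) = (real n + 2) / (real n + 1)" by (simp add: field_simps)
    have "ln (real n + 2) - ln (real n + 1) = ln (1 + 1 / (real n + 1))"
      unfolding e by (subst ln_div) auto
    also have "\<dots> \<le> 1 / (real n + 1)" by (intro ln_add_one_self_le_self) auto
    finally show ?thesis by (simp add: harm_Suc inverse_eq_divide add.commute)
  qed
  show ?case
  proof (cases "m = Suc n")
    case True then show ?thesis by simp
  next
    case False then have "m \<le> n" using Suc by simp
    then show ?thesis using Suc step by linarith
  qed
qed

lemma harm_diff_ln:
  assumes "1 \<le> N" "1 \<le> k"
  shows "harm k - harm N + ln (real N) \<le> ln (real k + 1)"
proof (cases "k \<le> N")
  case True
  have "harm k - ln (real k + 1) \<le> harm N - ln (real N + 1)" using harm_ln_inc[OF True] .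
  moreover have "ln (real N) \<le> ln (real N + 1)" using assms by simp
  ultimately show ?thesis by linarith
next
  case False
  have "harm k - ln (real k) \<le> harm N - ln (real N)"
    using euler_mascheroni_sequence_decreasing[of N k] assms False by simp
  moreover have "ln (real k) \<le> ln (real k + 1)" using assms by simp
  ultimately show ?thesis by linarith
qed

lemma X_side_big:
  fixes k :: nat and mu :: real
  assumes mu: "1 \<le> mu" and nu: "mu + 27/10 < real k"
  shows "ln ((real k + 1) / mu) \<le> 23589/10000 * ln ((real k + 1) / (mu + 1))"
proof -
  define L where "L = ln ((real k + 1) / (mu + 1))"
  have e1: "1 + 1 / mu = (mu + 1) / mu" using mu by (simp add: field_simps)
  have e2: "(real k + 1) / mu = ((real k + 1) / (mu + 1)) * ((mu + 1) / mu)" using mu by (simp add: divide_simps)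
  have r: "ln ((real k + 1) / mu) = L + ln (1 + 1 / mu)"
    unfolding L_def e1 e2 using mu by (subst ln_mult) auto
  have l1: "ln (1 + 1 / mu) \<le> 1 / mu" using mu by (intro ln_add_one_self_le_self) auto
  show ?thesis
  proof (cases "2 \<le> (real k + 1) / (mu + 1)")
    case True
    have "1 / mu \<le> 1" using mu by simp
    moreover have "0 < 1 / mu" using mu by simp
    ultimately have p1: "0 < 1 + 1 / mu" "1 + 1 / mu \<le> 2" by linarith+
    then have "ln (1 + 1 / mu) \<le> ln 2" by (subst ln_le_cancel_iff) auto
    also have "\<dots> \<le> L" unfolding L_def using True by (subst ln_le_cancel_iff) auto
    finally have "ln (1 + 1 / mu) \<le> L" .
    moreover have "0 \<le> ln (1 + 1 / mu)" using p1 mu by simp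
    ultimately show ?thesis unfolding r L_def[symmetric] by linarith
  next
    case False
    then have big: "real k - 1 < 2 * mu" using mu by (auto simp: field_simps)
    have k4: "37/10 < real k" using mu nu by simp
    have Lb: "(real k - mu) / (real k + 1) \<le> L"
    proof -
      have pos: "0 < (real k + 1) / (mu + 1)" using mu by auto
      have "ln (inverse ((real k + 1) / (mu + 1))) \<le> inverse ((real k + 1) / (mu + 1)) - 1"
        using pos mu by (intro ln_le_minus_one) auto
      moreover have "ln ((mu + 1) / (real k + 1)) = - ln ((real k + 1) / (mu + 1))" using mu by (simp add: ln_div)
      ultimately have "1 - (mu + 1) / (real k + 1) \<le> L" unfolding L_def by simp
      moreover have "1 - (mu + 1) / (real k + 1) = (real k - mu) / (real k + 1)" using mu by (simp add: field_simps)
      ultimately show ?thesis by simp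
    qed
    have c1: "1 / mu \<le> 2 / (real k - 1)" using big k4 mu by (simp add: field_simps)
    have c2: "2 / (real k - 1) \<le> 13589/10000 * ((27/10) / (real k + 1))" using k4 by (simp add: field_simps)
    have c3: "(27/10) / (real k + 1) \<le> (real k - mu) / (real k + 1)" using nu by (intro divide_right_mono) auto
    have "1 / mu \<le> 13589/10000 * L" using c1 c2 c3 Lb by linarith
    then show ?thesis unfolding r L_def[symmetric] using l1 by simp
  qed
qed


lemma psi_small:
  assumes "finite S" "\<And>i. i \<in> S \<Longrightarrow> 0 \<le> y i \<and> y i \<le> 1"
  shows "(\<Sum>i\<in>S. y i) / (1 + (\<Sum>i\<in>S. y i)) \<le> ev S y harm"
proof -
  define mu where "mu = (\<Sum>i\<in>S. y i)"
  have mu0: "0 \<le> mu" unfolding mu_def using assms by (intro sum_nonneg) auto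
  have hm: "\<And>n. 1 - (0::real) ^ n \<le> harm n"
  proof -
    fix n :: nat
    show "1 - (0::real) ^ n \<le> harm n"
    proof (cases n)
      case 0 then show ?thesis by (simp add: harm_def)
    next
      case (Suc n')
      have "harm (1::nat) \<le> (harm n :: real)" using Suc by (intro harm_mono) auto
      then show ?thesis using Suc by (simp add: harm_def)
    qed
  qed
  have "ev S y (\<lambda>n. 1 - (0::real) ^ n) = 1 - (\<Prod>i\<in>S. 1 - y i)"
    using ev_diff[of S y "\<lambda>_. 1" "\<lambda>n. (0::real) ^ n"] ev_const[OF assms(1)] ev_pow[OF assms(1), of y 0] by simp
  moreover have "(\<Prod>i\<in>S. 1 - y i) \<le> (\<Prod>i\<in>S. exp (- y i))"
  proof (intro prod_mono conjI)
    fix i assume "i \<in> S"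
    then show "0 \<le> 1 - y i" using assms by auto
    show "1 - y i \<le> exp (- y i)" using exp_ge_add_one_self[of "- y i"] by simp
  qed
  moreover have "(\<Prod>i\<in>S. exp (- y i)) = exp (- mu)"
  proof -
    have "exp (- mu) = exp (\<Sum>i\<in>S. - y i)" by (simp add: mu_def sum_negf)
    also have "\<dots> = (\<Prod>i\<in>S. exp (- y i))" using assms(1) by (rule exp_sum)
    finally show ?thesis by simp
  qed
  moreover have "exp (- mu) \<le> 1 / (1 + mu)"
  proof -
    have "1 + mu \<le> exp mu" by simp
    then have "1 / exp mu \<le> 1 / (1 + mu)" using mu0 by (intro divide_left_mono) auto
    then show ?thesis by (simp add: exp_minus inverse_eq_divide)
  qed
  moreover have "1 - 1 / (1 + mu) = mu / (1 + mu)" using mu0 by (simp add: field_simps)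
  moreover have "ev S y (\<lambda>n. 1 - (0::real) ^ n) \<le> ev S y harm" using assms hm by (intro ev_mono) auto
  ultimately show ?thesis unfolding mu_def[symmetric] by linarith
qed

lemma X_side_small:
  fixes k :: nat and mu :: real
  assumes "3 \<le> k" "0 \<le> mu" "mu \<le> 1"
  shows "harm k - mu / (1 + mu) \<le> 23589/10000 * (harm k - mu)"
proof -
  have "harm (3::nat) \<le> (harm k :: real)" using assms by (intro harm_mono) auto
  then have hk: "11/6 \<le> (harm k :: real)" by (simp add: harm_def eval_nat_numeral)
  have "mu - mu / (1 + mu) = mu * mu / (1 + mu)" using assms by (simp add: field_simps)
  also have "\<dots> \<le> 1"
  proof -
    have "mu * mu \<le> 1 * 1" using assms by (intro mult_mono) auto
    then show ?thesis using assms by (simp add: divide_le_eq)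
  qed
  finally have "mu - mu / (1 + mu) \<le> 1" .
  moreover have "23589/10000 * (harm k - mu) = 23589/10000 * harm k - 23589/10000 * mu" by (rule right_diff_distrib)
  ultimately show ?thesis using hk assms by linarith
qed



definition gk :: "nat \<Rightarrow> nat \<Rightarrow> real" where
  "gk k X = (\<Sum>l\<in>{1..k}. if X < l then 1 / real l else 0)"

lemma gk_Suc: "gk (Suc k) X = gk k X + (if X < Suc k then 1 / real (Suc k) else 0)"
  unfolding gk_def by (simp add: atLeastAtMostSuc_conv)

lemma gk_harm: "X \<le> k \<Longrightarrow> gk k X = harm k - harm X"
proof (induction k)
  case 0 then show ?case by (simp add: gk_def)
next
  case (Suc k)
  show ?case
  proof (cases "X = Suc k")
    case True
    then show ?thesis unfolding gk_def by simp
  next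
    case False
    then have "X \<le> k" using Suc by simp
    then show ?thesis using Suc gk_Suc[of k X] by (simp add: harm_Suc inverse_eq_divide)
  qed
qed

lemma gk_step: "Suc X \<le> k \<Longrightarrow> gk k X = gk k (Suc X) + 1 / real (Suc X)"
proof -
  assume a: "Suc X \<le> k"
  have "gk k X = (\<Sum>l\<in>{1..k}. (if Suc X < l then 1 / real l else 0) + (if l = Suc X then 1 / real l else 0))"
    unfolding gk_def by (intro sum.cong) auto
  also have "\<dots> = gk k (Suc X) + 1 / real (Suc X)" using a by (simp add: sum.distrib gk_def)
  finally show ?thesis .
qed

lemma gk_G2:
  assumes "1 \<le> k" "d \<le> k"
  shows "gk k (k - d) \<le> real d / real k + real d * (real d - 1) / (2 * real k)"
  using assms(2)
proof (induction d)
  case 0 then show ?case by (simp add: gk_def)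
next
  case (Suc d)
  have kd: "Suc (k - Suc d) = k - d" using Suc by simp
  have "gk k (k - Suc d) = gk k (k - d) + 1 / real (k - d)"
    using gk_step[of "k - Suc d" k] Suc kd by simp
  also have "1 / real (k - d) \<le> 1 / real k + real d / real k"
  proof -
    have pos: "0 < real (k - d)" using Suc by simp
    have "real k \<le> real (k - d) * (1 + real d)"
    proof -
      have "real (k - d) = real k - real d" using Suc by simp
      moreover have "0 \<le> real d * (real k - real d - 1)" using Suc by simp
      ultimately show ?thesis by (simp add: algebra_simps)
    qed
    then show ?thesis using pos assms(1) by (simp add: field_simps)
  qed
  finally have "gk k (k - Suc d) \<le> gk k (k - d) + (1 / real k + real d / real k)" by simp
  also have "\<dots> \<le> real d / real k + real d * (real d - 1) / (2 * real k) + (1 / real k + real d / real k)"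
    using Suc by simp
  also have "\<dots> = real (Suc d) / real k + real (Suc d) * (real (Suc d) - 1) / (2 * real k)"
    using assms(1) by (simp add: field_simps)
  finally show ?case .
qed


lemma final_split:
  fixes m :: nat and S :: "nat set" and Y :: "nat \<Rightarrow> real"
  assumes "S \<subseteq> {..<m}" "card {i. i < m \<and> Y i = 1} = k"
  shows "card {i\<in>S. Y i = (1::real)} + card {i\<in>{..<m} - S. Y i = 1} = k"
proof -
  have u: "{i. i < m \<and> Y i = 1} = {i\<in>S. Y i = 1} \<union> {i\<in>{..<m} - S. Y i = 1}" using assms by auto
  have f1: "finite {i\<in>S. Y i = 1}" by (rule finite_subset[of _ "{..<m}"]) (use assms in auto)
  have f2: "finite {i\<in>{..<m} - S. Y i = 1}" by (rule finite_subset[of _ "{..<m}"]) auto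
  have d: "{i\<in>S. Y i = 1} \<inter> {i\<in>{..<m} - S. Y i = 1} = {}" by auto
  show ?thesis using card_Un_disjoint[OF f1 f2 d] u assms(2) by simp
qed

lemma set_bound:
  fixes k m :: nat and y :: "nat \<Rightarrow> real" and S :: "nat set"
  assumes k1: "1 \<le> k" and S: "S \<subseteq> {..<m}" and T: "distinct (leaves T)" "set (leaves T) = {..<m}"
    and g: "good m y" and sy: "(\<Sum>i<m. y i) = real k"
    and B1: "(real k - (\<Sum>i\<in>S. y i)) / real k \<le> B"
    and B2: "harm k - (\<Sum>i\<in>S. y i) \<le> B"
    and B3: "ln ((real k + 1) / ((\<Sum>i\<in>S. y i) + 1)) \<le> B"
  shows "measure_pmf.expectation (rounded T y) (\<lambda>Y. gk k (card {i\<in>S. Y i = 1})) \<le> 23589/10000 * B"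
proof -
  define mu where "mu = (\<Sum>i\<in>S. y i)"
  define S' where "S' = {..<m} - S"
  define nu where "nu = (\<Sum>i\<in>S'. y i)"
  have finS: "finite S" "finite S'" using S unfolding S'_def by (auto intro: finite_subset[of _ "{..<m}"])
  have yS: "\<And>i. i \<in> S \<Longrightarrow> 0 \<le> y i \<and> y i \<le> 1" and yS': "\<And>i. i \<in> S' \<Longrightarrow> 0 \<le> y i \<and> y i \<le> 1"
    using g S unfolding good_def S'_def by auto
  have munu: "mu + nu = real k"
  proof -
    have "(\<Sum>i<m. y i) = mu + nu" unfolding mu_def nu_def S'_def
      using sum.subset_diff[of S "{..<m}" y] S by simp
    then show ?thesis using sy by simp
  qed
  have mu0: "0 \<le> mu" unfolding mu_def using yS by (intro sum_nonneg) auto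
  have nu0: "0 \<le> nu" unfolding nu_def using yS' by (intro sum_nonneg) auto
  have fin: "\<And>Y. Y \<in> set_pmf (rounded T y) \<Longrightarrow>
      (\<forall>i<m. Y i = 0 \<or> Y i = 1) \<and> card {i\<in>S. Y i = 1} + card {i\<in>S'. Y i = 1} = k"
  proof -
    fix Y assume Y: "Y \<in> set_pmf (rounded T y)"
    have r: "good m Y \<and> (\<forall>i<m. Y i = 0 \<or> Y i = 1) \<and> card {i. i < m \<and> Y i = 1} = k"
      using rounded_final[OF T g sy Y] .
    then have "card {i\<in>S. Y i = 1} + card {i\<in>S'. Y i = 1} = k" using final_split[OF S] unfolding S'_def by blast
    then show "(\<forall>i<m. Y i = 0 \<or> Y i = 1) \<and> card {i\<in>S. Y i = 1} + card {i\<in>S'. Y i = 1} = k" using r by blast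
  qed
  have Tsub: "set (leaves T) \<subseteq> {..<m}" using T by simp
  show ?thesis
  proof (cases "nu \<le> 27/10")
    case True
    define G2 where "G2 = (\<lambda>n. real n / real k + real n * (real n - 1) / (2 * real k))"
    have TP: "TP m (\<lambda>Y. ev S' Y G2)"
    proof (rule TP_ev)
      show "finite S'" using finS by simp
      show "S' \<subseteq> {..<m}" unfolding S'_def by auto
      fix n
      show "0 \<le> G2 (Suc (Suc n)) - 2 * G2 (Suc n) + G2 n" using k1 unfolding G2_def by (simp add: field_simps)
    qed
    have "measure_pmf.expectation (rounded T y) (\<lambda>Y. gk k (card {i\<in>S. Y i = 1}))
        \<le> measure_pmf.expectation (rounded T y) (\<lambda>Y. ev S' Y G2)"
    proof (rule exp_mono_pmf[OF finite_rounded])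
      fix Y assume Y: "Y \<in> set_pmf (rounded T y)"
      have Y01: "\<And>i. i \<in> S' \<Longrightarrow> Y i = 0 \<or> Y i = 1" using fin[OF Y] unfolding S'_def by auto
      have c: "card {i\<in>S. Y i = 1} = k - card {i\<in>S'. Y i = 1}" "card {i\<in>S'. Y i = 1} \<le> k" using fin[OF Y] by auto
      have "ev S' Y G2 = G2 (card {i\<in>S'. Y i = 1})" using ev_01[OF finS(2) Y01] .
      then show "gk k (card {i\<in>S. Y i = 1}) \<le> ev S' Y G2"
        unfolding c(1) G2_def using gk_G2[OF k1 c(2)] by simp
    qed
    also have "\<dots> \<le> ev S' y G2" using rounded_exp[OF TP T(1) Tsub g] .
    also have "\<dots> = nu / real k + ev S' y (\<lambda>n. real n * (real n - 1)) / (2 * real k)"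
    proof -
      have "ev S' y G2 = (1 / real k) * ev S' y real + (1 / (2 * real k)) * ev S' y (\<lambda>n. real n * (real n - 1))"
        unfolding G2_def using ev_lin[of S' y "1 / real k" real "1 / (2 * real k)" "\<lambda>n. real n * (real n - 1)"]
        by simp
      then show ?thesis using ev_id[OF finS(2)] unfolding nu_def by simp
    qed
    also have "\<dots> \<le> nu / real k + nu ^ 2 / (2 * real k)"
      using ev_quad[OF finS(2), of y] yS' k1 unfolding nu_def by (intro add_left_mono divide_right_mono) auto
    also have "\<dots> \<le> 23589/10000 * (nu / real k)"
    proof -
      have "nu ^ 2 / (2 * real k) = (nu / 2) * (nu / real k)" by (simp add: power2_eq_square)
      also have "\<dots> \<le> (27/20) * (nu / real k)" using True nu0 by (intro mult_right_mono) auto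
      finally have h: "nu ^ 2 / (2 * real k) \<le> (27/20) * (nu / real k)" .
      have t0: "0 \<le> nu / real k" using nu0 by simp
      show ?thesis using h t0 by linarith
    qed
    also have "\<dots> \<le> 23589/10000 * B"
    proof -
      have "nu = real k - mu" using munu by simp
      then have "nu / real k \<le> B" using B1 unfolding mu_def by simp
      then show ?thesis by (intro mult_left_mono) auto
    qed
    finally show ?thesis .
  next
    case False
    define H where "H = (\<lambda>n. harm k - harm n :: real)"
    have TP: "TP m (\<lambda>Y. ev S Y H)"
    proof (rule TP_ev)
      show "finite S" using finS by simp
      show "S \<subseteq> {..<m}" using S .
      fix n
      show "0 \<le> H (Suc (Suc n)) - 2 * H (Suc n) + H n" using harm_concave[of n] unfolding H_def by simp
    qed
    have "measure_pmf.expectation (rounded T y) (\<lambda>Y. gk k (card {i\<in>S. Y i = 1}))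
        \<le> measure_pmf.expectation (rounded T y) (\<lambda>Y. ev S Y H)"
    proof (rule exp_mono_pmf[OF finite_rounded])
      fix Y assume Y: "Y \<in> set_pmf (rounded T y)"
      have Y01: "\<And>i. i \<in> S \<Longrightarrow> Y i = 0 \<or> Y i = 1" using fin[OF Y] S by auto
      have c: "card {i\<in>S. Y i = 1} \<le> k" using fin[OF Y] by auto
      have "ev S Y H = H (card {i\<in>S. Y i = 1})" using ev_01[OF finS(1) Y01] .
      then show "gk k (card {i\<in>S. Y i = 1}) \<le> ev S Y H"
        unfolding H_def using gk_harm[OF c] by simp
    qed
    also have "\<dots> \<le> ev S y H" using rounded_exp[OF TP T(1) Tsub g] .
    also have "\<dots> = harm k - ev S y harm"
      unfolding H_def using ev_diff[of S y "\<lambda>_. harm k" harm] ev_const[OF finS(1)] by simp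
    also have "\<dots> \<le> 23589/10000 * B"
    proof (cases "mu \<le> 1")
      case True
      have "(2::real) < real k" using False munu mu0 by linarith
      then have k3: "3 \<le> k" by simp
      have "harm k - ev S y harm \<le> harm k - mu / (1 + mu)"
        using psi_small[OF finS(1) yS] unfolding mu_def by simp
      also have "\<dots> \<le> 23589/10000 * (harm k - mu)" using X_side_small[OF k3 mu0 True] .
      also have "\<dots> \<le> 23589/10000 * B" using B2 unfolding mu_def by simp
      finally show ?thesis .
    next
      case mu1: False
      have Sne: "S \<noteq> {}" using mu1 unfolding mu_def by auto
      have N1: "1 \<le> card S" using Sne finS by (simp add: Suc_le_eq card_gt_0_iff)
      have mupos: "0 < mu" using mu1 by simp
      have "harm (card S) + ln (mu / real (card S)) \<le> ev S y harm"
        using psi_lower[OF finS(1) Sne yS] mupos unfolding mu_def by simp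
      moreover have "ln (mu / real (card S)) = ln mu - ln (real (card S))" using mupos N1 by (simp add: ln_div)
      moreover have "harm k - harm (card S) + ln (real (card S)) \<le> ln (real k + 1)" using harm_diff_ln[OF N1 k1] .
      moreover have "ln ((real k + 1) / mu) = ln (real k + 1) - ln mu" using mupos by (simp add: ln_div)
      ultimately have "harm k - ev S y harm \<le> ln ((real k + 1) / mu)" by linarith
      also have "\<dots> \<le> 23589/10000 * ln ((real k + 1) / (mu + 1))"
        using X_side_big[of mu k] mu1 False munu by simp
      also have "\<dots> \<le> 23589/10000 * B" using B3 unfolding mu_def by simp
      finally show ?thesis .
    qed
    finally show ?thesis .
  qed
qed



lemma harm_real_def: "harm k = (\<Sum>l\<in>{1..k}. 1 / real l)"
  by (simp add: harm_def inverse_eq_divide)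

lemma fill_bound:
  fixes c :: "nat \<Rightarrow> real" and q k :: nat
  assumes "q \<le> k" "\<And>l. l \<in> {1..k} \<Longrightarrow> 0 \<le> c l \<and> c l \<le> 1" "(\<Sum>l\<in>{1..k}. c l) \<le> mu"
  shows "(\<Sum>l\<in>{1..k}. c l / real l) \<le> harm q + (mu - real q) / (real q + 1)"
proof -
  define r where "r = 1 / (real q + 1)"
  have e1: "(\<Sum>l\<in>{1..k}. c l / real l) = (\<Sum>l\<in>{1..k}. c l * (1 / real l - r)) + r * (\<Sum>l\<in>{1..k}. c l)"
    by (simp add: sum_distrib_left algebra_simps sum.distrib[symmetric] sum_subtractf[symmetric])
  have "(\<Sum>l\<in>{1..k}. c l * (1 / real l - r)) \<le> (\<Sum>l\<in>{1..k}. if l \<le> q then 1 / real l - r else 0)"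
  proof (intro sum_mono)
    fix l assume l: "l \<in> {1..k}"
    show "c l * (1 / real l - r) \<le> (if l \<le> q then 1 / real l - r else 0)"
    proof (cases "l \<le> q")
      case True
      have "0 \<le> 1 / real l - r" using True l unfolding r_def by (simp add: field_simps)
      then show ?thesis using True assms(2)[OF l] by (simp add: mult_left_le_one_le)
    next
      case False
      have "1 / real l \<le> 1 / (real q + 1)" using False l by (intro divide_left_mono) auto
      then have "1 / real l - r \<le> 0" unfolding r_def by simp
      then show ?thesis using False assms(2)[OF l] by (simp add: mult_nonneg_nonpos)
    qed
  qed
  also have "(\<Sum>l\<in>{1..k}. if l \<le> q then 1 / real l - r else 0) = (\<Sum>l\<in>{1..q}. 1 / real l - r)"
    using assms(1) by (intro sum.mono_neutral_cong_right) auto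
  also have "\<dots> = harm q - real q * r" by (simp add: sum_subtractf harm_real_def)
  finally have e2: "(\<Sum>l\<in>{1..k}. c l * (1 / real l - r)) \<le> harm q - real q * r" .
  have e3: "r * (\<Sum>l\<in>{1..k}. c l) \<le> r * mu" using assms(3) unfolding r_def by (intro mult_left_mono) auto
  have e4: "harm q - real q * r + r * mu = harm q + (mu - real q) / (real q + 1)" unfolding r_def by (simp add: algebra_simps diff_divide_distrib)
  show ?thesis using e1 e2 e3 e4 by linarith
qed

lemma lev_bounds:
  fixes a b :: "nat \<Rightarrow> real" and k :: nat
  assumes k1: "1 \<le> k" and ab: "\<And>l. l \<in> {1..k} \<Longrightarrow> 0 \<le> a l \<and> 0 \<le> b l \<and> 1 \<le> a l + b l"
    and sa: "(\<Sum>l\<in>{1..k}. a l) \<le> mu" and mu0: "0 \<le> mu"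
  shows "(real k - mu) / real k \<le> (\<Sum>l\<in>{1..k}. b l / real l)"
    and "harm k - mu \<le> (\<Sum>l\<in>{1..k}. b l / real l)"
    and "ln ((real k + 1) / (mu + 1)) \<le> (\<Sum>l\<in>{1..k}. b l / real l)"
proof -
  have "(real k - mu) / real k \<le> (\<Sum>l\<in>{1..k}. (1 - a l) / real k)"
  proof -
    have "(\<Sum>l\<in>{1..k}. (1 - a l) / real k) = (real k - (\<Sum>l\<in>{1..k}. a l)) / real k"
      by (simp add: sum_divide_distrib[symmetric] sum_subtractf)
    then show ?thesis using sa k1 by (simp add: divide_right_mono)
  qed
  also have "\<dots> \<le> (\<Sum>l\<in>{1..k}. b l / real l)"
  proof (intro sum_mono)
    fix l assume l: "l \<in> {1..k}"
    have "(1 - a l) / real k \<le> b l / real k" using ab[OF l] k1 by (intro divide_right_mono) auto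
    also have "\<dots> \<le> b l / real l" using ab[OF l] l by (intro divide_left_mono) auto
    finally show "(1 - a l) / real k \<le> b l / real l" .
  qed
  finally show "(real k - mu) / real k \<le> (\<Sum>l\<in>{1..k}. b l / real l)" .
next
  have "harm k - mu \<le> harm k - (\<Sum>l\<in>{1..k}. a l / real l)"
  proof -
    have "(\<Sum>l\<in>{1..k}. a l / real l) \<le> (\<Sum>l\<in>{1..k}. a l)"
    proof (intro sum_mono)
      fix l assume l: "l \<in> {1..k}"
      have "a l / real l \<le> a l / 1" using ab[OF l] l by (intro divide_left_mono) auto
      then show "a l / real l \<le> a l" by simp
    qed
    then show ?thesis using sa by simp
  qed
  also have "\<dots> = (\<Sum>l\<in>{1..k}. (1 - a l) / real l)"
    by (simp add: harm_real_def diff_divide_distrib sum_subtractf)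
  also have "\<dots> \<le> (\<Sum>l\<in>{1..k}. b l / real l)"
  proof (intro sum_mono)
    fix l assume l: "l \<in> {1..k}"
    have "1 - a l \<le> b l" using ab[OF l] by linarith
    then show "(1 - a l) / real l \<le> b l / real l" by (intro divide_right_mono) auto
  qed
  finally show "harm k - mu \<le> (\<Sum>l\<in>{1..k}. b l / real l)" .
next
  have Lev0: "0 \<le> (\<Sum>l\<in>{1..k}. b l / real l)" using ab by (intro sum_nonneg) auto
  show "ln ((real k + 1) / (mu + 1)) \<le> (\<Sum>l\<in>{1..k}. b l / real l)"
  proof (cases "real k \<le> mu")
    case True
    then have "ln ((real k + 1) / (mu + 1)) \<le> 0" using mu0 by (simp add: divide_le_eq)
    then show ?thesis using Lev0 by linarith
  next
    case False
    define q where "q = nat (floor mu)"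
    have q: "real q \<le> mu" "mu < real q + 1" unfolding q_def using mu0 by linarith+
    have qk: "q + 1 \<le> k" using q False by linarith
    define cc where "cc = (\<lambda>l. min (a l) 1)"
    have cc: "\<And>l. l \<in> {1..k} \<Longrightarrow> 0 \<le> cc l \<and> cc l \<le> 1" using ab unfolding cc_def by auto
    have scc: "(\<Sum>l\<in>{1..k}. cc l) \<le> mu" using sa unfolding cc_def by (smt (verit) sum_mono min.cobounded1)
    have "harm k - harm q - (mu - real q) / (real q + 1) \<le> harm k - (\<Sum>l\<in>{1..k}. cc l / real l)"
      using fill_bound[of q k cc mu] qk cc scc by simp
    also have "\<dots> = (\<Sum>l\<in>{1..k}. (1 - cc l) / real l)"
      by (simp add: harm_real_def diff_divide_distrib sum_subtractf)
    also have "\<dots> \<le> (\<Sum>l\<in>{1..k}. b l / real l)"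
    proof (intro sum_mono)
      fix l assume l: "l \<in> {1..k}"
      have "1 - cc l \<le> b l" using ab[OF l] unfolding cc_def by (auto simp: min_def)
      then show "(1 - cc l) / real l \<le> b l / real l" by (intro divide_right_mono) auto
    qed
    finally have lev: "harm k - harm q - (mu - real q) / (real q + 1) \<le> (\<Sum>l\<in>{1..k}. b l / real l)" .
    have h1: "ln (real k + 1) - ln (real (q + 1) + 1) \<le> harm k - harm (q + 1)"
      using harm_ln_inc[OF qk] by simp
    have h2: "harm (q + 1) = harm q + 1 / (real q + 1)" by (simp add: harm_Suc inverse_eq_divide add.commute)
    have h3: "ln (real q + 2) - ln (mu + 1) \<le> (1 - (mu - real q)) / (real q + 1)"
    proof -
      have "ln ((real q + 2) / (mu + 1)) \<le> (real q + 2) / (mu + 1) - 1" using mu0 by (intro ln_le_minus_one) auto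
      also have "\<dots> = (1 - (mu - real q)) / (mu + 1)" using mu0 by (simp add: field_simps)
      also have "\<dots> \<le> (1 - (mu - real q)) / (real q + 1)" using q by (intro divide_left_mono) auto
      finally show ?thesis using mu0 by (simp add: ln_div)
    qed
    have "ln ((real k + 1) / (mu + 1)) = ln (real k + 1) - ln (mu + 1)" using mu0 by (simp add: ln_div)
    moreover have "(1 - (mu - real q)) / (real q + 1) = 1 / (real q + 1) - (mu - real q) / (real q + 1)"
      by (simp add: diff_divide_distrib)
    ultimately show ?thesis using h1 h2 h3 lev by (simp add: add.commute)
  qed
qed



lemma sorted_nth_less_iff:
  fixes L :: "real list"
  assumes "sorted L" "j < length L"
  shows "(L ! j < t) \<longleftrightarrow> j < length (filter (\<lambda>x. x < t) L)"
  using assms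
proof (induction L arbitrary: j)
  case Nil then show ?case by simp
next
  case (Cons x xs)
  have sx: "sorted xs" "\<And>z. z \<in> set xs \<Longrightarrow> x \<le> z" using Cons.prems by auto
  show ?case
  proof (cases "x < t")
    case True
    show ?thesis
    proof (cases j)
      case 0 then show ?thesis using True by simp
    next
      case (Suc j')
      then show ?thesis using True Cons.IH[OF sx(1)] Cons.prems by simp
    qed
  next
    case False
    have "filter (\<lambda>x. x < t) xs = []" using sx(2) False by (force simp: filter_empty_conv)
    moreover have "\<not> (x # xs) ! j < t"
    proof (cases j)
      case 0 then show ?thesis using False by simp
    next
      case (Suc j')
      then have "xs ! j' \<in> set xs" using Cons.prems by simp
      then show ?thesis using sx(2) False Suc by force
    qed
    ultimately show ?thesis using False by simp
  qed
qed

lemma length_filter_sorted_costs: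
  assumes "finite C"
  shows "length (filter (\<lambda>x. x < t) (sorted_costs c C j)) = card {i\<in>C. c i j < t}"
proof -
  have "length (filter (\<lambda>x. x < t) (sorted_costs c C j)) = length (filter (\<lambda>x. x < t) (map (\<lambda>i. c i j) (sorted_list_of_set C)))"
    unfolding sorted_costs_def filter_sort length_sort by simp
  also have "\<dots> = length (filter (\<lambda>i. c i j < t) (sorted_list_of_set C))"
    by (simp add: filter_map comp_def)
  also have "\<dots> = card ({i. c i j < t} \<inter> C)"
    using assms by (simp add: distinct_length_filter)
  also have "{i. c i j < t} \<inter> C = {i\<in>C. c i j < t}" by auto
  finally show ?thesis .
qed

lemma telescope_w:
  fixes w :: "real list"
  assumes "sorted w" "distinct w" "t < length w"
  shows "w ! t = w ! 0 + (\<Sum>s\<in>{1..<length w}. (w ! s - w ! (s - 1)) * (if w ! s \<le> w ! t then 1 else 0))"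
proof -
  have iff: "\<And>s. s < length w \<Longrightarrow> (w ! s \<le> w ! t) \<longleftrightarrow> s \<le> t"
  proof -
    fix s assume s: "s < length w"
    show "(w ! s \<le> w ! t) \<longleftrightarrow> s \<le> t"
    proof
      assume "w ! s \<le> w ! t"
      show "s \<le> t"
      proof (rule ccontr)
        assume "\<not> s \<le> t"
        then have "w ! t \<le> w ! s" "w ! t \<noteq> w ! s" using assms s sorted_nth_mono[of w t s] nth_eq_iff_index_eq[of w t s] by auto
        then show False using \<open>w ! s \<le> w ! t\<close> by simp
      qed
    next
      assume "s \<le> t" then show "w ! s \<le> w ! t" using assms s sorted_nth_mono by blast
    qed
  qed
  have "(\<Sum>s\<in>{1..<length w}. (w ! s - w ! (s - 1)) * (if w ! s \<le> w ! t then 1 else 0))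
      = (\<Sum>s\<in>{1..<length w}. if s \<le> t then w ! s - w ! (s - 1) else 0)"
    using iff by (intro sum.cong) auto
  also have "\<dots> = (\<Sum>s\<in>{1..t}. w ! s - w ! (s - 1))"
    using assms by (intro sum.mono_neutral_cong_right) auto
  also have "\<dots> = (\<Sum>i<t. w ! Suc i - w ! i)"
  proof -
    have "{1..t} = Suc ` {..<t}" by (simp add: image_Suc_lessThan)
    then show ?thesis by (simp add: sum.reindex)
  qed
  also have "\<dots> = w ! t - w ! 0" by (rule sum_lessThan_telescope)
  finally show ?thesis by simp
qed


lemma cost_decomp:
  fixes c :: "nat \<Rightarrow> nat \<Rightarrow> real" and C :: "nat set" and m k j :: nat
  assumes C: "C \<subseteq> {..<m}" "card C = k"
  defines "w \<equiv> sorted_list_of_set ((\<lambda>i. c i j) ` {..<m})"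
  shows "ordered_cost c k C j = harm k * w ! 0 +
     (\<Sum>s\<in>{1..<length w}. (w ! s - w ! (s - 1)) * gk k (card {i\<in>C. c i j < w ! s}))"
proof -
  define L where "L = sorted_costs c C j"
  have finC: "finite C" using C finite_subset by blast
  have lenL: "length L = k" unfolding L_def sorted_costs_def using C finC by simp
  have sL: "sorted L" unfolding L_def sorted_costs_def by simp
  have setL: "set L = (\<lambda>i. c i j) ` C" unfolding L_def sorted_costs_def using finC by simp
  have finV: "finite ((\<lambda>i. c i j) ` {..<m})" by simp
  have setw: "set w = (\<lambda>i. c i j) ` {..<m}" unfolding w_def using finV by simp
  have sw: "sorted w" "distinct w" unfolding w_def by auto
  have tm: "L ! (l - 1) = w ! 0 + (\<Sum>s\<in>{1..<length w}. (w ! s - w ! (s - 1)) * (if card {i\<in>C. c i j < w ! s} < l then 1 else 0))"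
    if l: "l \<in> {1..k}" for l
  proof -
    have "L ! (l - 1) \<in> set L" using l lenL by auto
    then have "L ! (l - 1) \<in> set w" using setL setw C by auto
    then obtain t where t: "t < length w" "L ! (l - 1) = w ! t" by (auto simp: in_set_conv_nth)
    have "L ! (l - 1) = w ! 0 + (\<Sum>s\<in>{1..<length w}. (w ! s - w ! (s - 1)) * (if w ! s \<le> L ! (l - 1) then 1 else 0))"
      using telescope_w[OF sw t(1)] t(2) by simp
    also have "\<dots> = w ! 0 + (\<Sum>s\<in>{1..<length w}. (w ! s - w ! (s - 1)) * (if card {i\<in>C. c i j < w ! s} < l then 1 else 0))"
    proof -
      have "\<And>s. (w ! s \<le> L ! (l - 1)) \<longleftrightarrow> card {i\<in>C. c i j < w ! s} < l"
      proof -
        fix s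
        have "(L ! (l - 1) < w ! s) \<longleftrightarrow> l - 1 < length (filter (\<lambda>x. x < w ! s) L)"
          using sorted_nth_less_iff[OF sL, of "l - 1" "w ! s"] l lenL by auto
        also have "length (filter (\<lambda>x. x < w ! s) L) = card {i\<in>C. c i j < w ! s}"
          unfolding L_def using length_filter_sorted_costs[OF finC] .
        finally show "(w ! s \<le> L ! (l - 1)) \<longleftrightarrow> card {i\<in>C. c i j < w ! s} < l" using l by auto
      qed
      then show ?thesis by simp
    qed
    finally show ?thesis .
  qed
  have "ordered_cost c k C j = (\<Sum>l\<in>{1..k}. (1 / real l) * (L ! (l - 1)))"
    unfolding ordered_cost_def L_def ..
  also have "\<dots> = (\<Sum>l\<in>{1..k}. (1 / real l) * w ! 0 +
       (\<Sum>s\<in>{1..<length w}. (w ! s - w ! (s - 1)) * (if card {i\<in>C. c i j < w ! s} < l then 1 / real l else 0)))"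
  proof (intro sum.cong refl)
    fix l assume l: "l \<in> {1..k}"
    have "(1 / real l) * (L ! (l - 1)) = (1 / real l) * w ! 0 +
       (\<Sum>s\<in>{1..<length w}. (1 / real l) * ((w ! s - w ! (s - 1)) * (if card {i\<in>C. c i j < w ! s} < l then 1 else 0)))"
      unfolding tm[OF l] by (simp add: sum_distrib_left distrib_left)
    also have "(\<Sum>s\<in>{1..<length w}. (1 / real l) * ((w ! s - w ! (s - 1)) * (if card {i\<in>C. c i j < w ! s} < l then 1 else 0)))
       = (\<Sum>s\<in>{1..<length w}. (w ! s - w ! (s - 1)) * (if card {i\<in>C. c i j < w ! s} < l then 1 / real l else 0))"
      by (intro sum.cong refl) auto
    finally show "(1 / real l) * (L ! (l - 1)) = (1 / real l) * w ! 0 +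
       (\<Sum>s\<in>{1..<length w}. (w ! s - w ! (s - 1)) * (if card {i\<in>C. c i j < w ! s} < l then 1 / real l else 0))" .
  qed
  also have "\<dots> = harm k * w ! 0 + (\<Sum>s\<in>{1..<length w}. (w ! s - w ! (s - 1)) * gk k (card {i\<in>C. c i j < w ! s}))"
  proof -
    define f where "f = (\<lambda>l s. (w ! s - w ! (s - 1)) * (if card {i\<in>C. c i j < w ! s} < l then 1 / real l else 0))"
    have "(\<Sum>l\<in>{1..k}. (1 / real l) * w ! 0 + (\<Sum>s\<in>{1..<length w}. f l s))
        = (\<Sum>l\<in>{1..k}. (1 / real l)) * w ! 0 + (\<Sum>l\<in>{1..k}. \<Sum>s\<in>{1..<length w}. f l s)"
      by (simp add: sum.distrib sum_distrib_right)
    also have "(\<Sum>l\<in>{1..k}. \<Sum>s\<in>{1..<length w}. f l s) = (\<Sum>s\<in>{1..<length w}. \<Sum>l\<in>{1..k}. f l s)"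
      by (rule sum.swap)
    also have "\<dots> = (\<Sum>s\<in>{1..<length w}. (w ! s - w ! (s - 1)) * gk k (card {i\<in>C. c i j < w ! s}))"
      unfolding f_def gk_def by (simp add: sum_distrib_left)
    finally show ?thesis unfolding f_def harm_real_def by simp
  qed
  finally show ?thesis .
qed



lemma E_sum:
  fixes p :: "'a pmf" and f :: "'a \<Rightarrow> real"
  assumes "finite (set_pmf p)"
  shows "measure_pmf.expectation p f = (\<Sum>x\<in>set_pmf p. pmf p x * f x)"
  using integral_measure_pmf[OF assms, of p f] by simp

lemma lp_decomp:
  fixes c :: "nat \<Rightarrow> nat \<Rightarrow> real" and xs :: "nat \<Rightarrow> nat \<Rightarrow> nat \<Rightarrow> real"
  assumes x1: "\<And>l. l \<in> {1..k} \<Longrightarrow> 1 \<le> (\<Sum>i<m. xs l i j)"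
    and x0: "\<And>l i. l \<in> {1..k} \<Longrightarrow> i < m \<Longrightarrow> 0 \<le> xs l i j"
    and cn: "\<And>i. i < m \<Longrightarrow> 0 \<le> c i j" and m0: "0 < m"
  defines "w \<equiv> sorted_list_of_set ((\<lambda>i. c i j) ` {..<m})"
  shows "harm k * w ! 0 + (\<Sum>s\<in>{1..<length w}. (w ! s - w ! (s - 1)) *
      (\<Sum>l\<in>{1..k}. (\<Sum>i\<in>{..<m} - {i. i < m \<and> c i j < w ! s}. xs l i j) / real l))
    \<le> lp_client_cost m k c xs j"
proof -
  define D where "D = (\<lambda>s. w ! s - w ! (s - 1))"
  define ind where "ind = (\<lambda>s i. if w ! s \<le> c i j then (1::real) else 0)"
  have finV: "finite ((\<lambda>i. c i j) ` {..<m})" by simp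
  have setw: "set w = (\<lambda>i. c i j) ` {..<m}" unfolding w_def using finV by simp
  have sw: "sorted w" "distinct w" unfolding w_def by auto
  have ci: "c i j = w ! 0 + (\<Sum>s\<in>{1..<length w}. D s * ind s i)" if i: "i < m" for i
  proof -
    have "c i j \<in> set w" using setw i by auto
    then obtain t where t: "t < length w" "c i j = w ! t" by (auto simp: in_set_conv_nth)
    show ?thesis using telescope_w[OF sw t(1)] t(2) unfolding D_def ind_def by simp
  qed
  have w0: "0 \<le> w ! 0"
  proof -
    have "w \<noteq> []" using setw m0 by auto
    then have "w ! 0 \<in> set w" by simp
    then show ?thesis using setw cn by auto
  qed
  have "lp_client_cost m k c xs j = (\<Sum>l\<in>{1..k}. \<Sum>i<m. (1 / real l) * xs l i j * (w ! 0 + (\<Sum>s\<in>{1..<length w}. D s * ind s i)))"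
    unfolding lp_client_cost_def by (intro sum.cong refl) (simp add: ci)
  also have "\<dots> = w ! 0 * (\<Sum>l\<in>{1..k}. (1 / real l) * (\<Sum>i<m. xs l i j))
      + (\<Sum>s\<in>{1..<length w}. D s * (\<Sum>l\<in>{1..k}. (1 / real l) * (\<Sum>i<m. xs l i j * ind s i)))"
  proof -
    define F where "F = (\<lambda>l i s. (1 / real l) * xs l i j * (D s * ind s i))"
    have a: "(\<Sum>l\<in>{1..k}. \<Sum>i<m. (1 / real l) * xs l i j * (w ! 0 + (\<Sum>s\<in>{1..<length w}. D s * ind s i)))
        = (\<Sum>l\<in>{1..k}. \<Sum>i<m. (1 / real l) * xs l i j * w ! 0) + (\<Sum>l\<in>{1..k}. \<Sum>i<m. \<Sum>s\<in>{1..<length w}. F l i s)"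
      unfolding F_def by (simp add: distrib_left sum.distrib sum_distrib_left)
    have b: "(\<Sum>l\<in>{1..k}. \<Sum>i<m. (1 / real l) * xs l i j * w ! 0) = w ! 0 * (\<Sum>l\<in>{1..k}. (1 / real l) * (\<Sum>i<m. xs l i j))"
      by (simp add: sum_distrib_left sum_distrib_right algebra_simps)
    have c: "(\<Sum>l\<in>{1..k}. \<Sum>i<m. \<Sum>s\<in>{1..<length w}. F l i s) = (\<Sum>s\<in>{1..<length w}. \<Sum>l\<in>{1..k}. \<Sum>i<m. F l i s)"
    proof -
      have "(\<Sum>l\<in>{1..k}. \<Sum>i<m. \<Sum>s\<in>{1..<length w}. F l i s) = (\<Sum>l\<in>{1..k}. \<Sum>s\<in>{1..<length w}. \<Sum>i<m. F l i s)"
        by (rule sum.cong[OF refl]) (rule sum.swap)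
      also have "\<dots> = (\<Sum>s\<in>{1..<length w}. \<Sum>l\<in>{1..k}. \<Sum>i<m. F l i s)" by (rule sum.swap)
      finally show ?thesis .
    qed
    have d: "(\<Sum>s\<in>{1..<length w}. \<Sum>l\<in>{1..k}. \<Sum>i<m. F l i s)
        = (\<Sum>s\<in>{1..<length w}. D s * (\<Sum>l\<in>{1..k}. (1 / real l) * (\<Sum>i<m. xs l i j * ind s i)))"
      unfolding F_def by (simp add: sum_distrib_left algebra_simps)
    show ?thesis using a b c d by simp
  qed
  finally have eq: "lp_client_cost m k c xs j = w ! 0 * (\<Sum>l\<in>{1..k}. (1 / real l) * (\<Sum>i<m. xs l i j))
      + (\<Sum>s\<in>{1..<length w}. D s * (\<Sum>l\<in>{1..k}. (1 / real l) * (\<Sum>i<m. xs l i j * ind s i)))" .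
  have h: "harm k \<le> (\<Sum>l\<in>{1..k}. (1 / real l) * (\<Sum>i<m. xs l i j))"
    unfolding harm_real_def
  proof (intro sum_mono)
    fix l assume l: "l \<in> {1..k}"
    have "1 / real l * 1 \<le> 1 / real l * (\<Sum>i<m. xs l i j)" using x1[OF l] by (intro mult_left_mono) auto
    then show "1 / real l \<le> 1 / real l * (\<Sum>i<m. xs l i j)" by simp
  qed
  have ind_eq: "(\<Sum>i<m. xs l i j * ind s i) = (\<Sum>i\<in>{..<m} - {i. i < m \<and> c i j < w ! s}. xs l i j)" for l s
  proof -
    have "(\<Sum>i<m. xs l i j * ind s i) = (\<Sum>i<m. if i \<in> {..<m} - {i. i < m \<and> c i j < w ! s} then xs l i j else 0)"
      unfolding ind_def by (intro sum.cong refl) auto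
    also have "\<dots> = (\<Sum>i\<in>{..<m} - {i. i < m \<and> c i j < w ! s}. xs l i j)"
    proof -
      have "{..<m} \<inter> {i. i \<in> {..<m} - {i. i < m \<and> c i j < w ! s}} = {..<m} - {i. i < m \<and> c i j < w ! s}" by auto
      then show ?thesis by (simp only: sum.If_cases[of "{..<m}" "\<lambda>i. i \<in> {..<m} - {i. i < m \<and> c i j < w ! s}"] finite_lessThan) simp
    qed
    finally show ?thesis .
  qed
  have "harm k * w ! 0 \<le> w ! 0 * (\<Sum>l\<in>{1..k}. (1 / real l) * (\<Sum>i<m. xs l i j))"
    using mult_left_mono[OF h w0] by (simp add: mult.commute)
  then show ?thesis unfolding eq D_def ind_eq by (simp add: divide_inverse mult.commute)
qed


theorem lemma2:
  fixes m n k :: nat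
    and c :: "nat \<Rightarrow> nat \<Rightarrow> real"
    and xs :: "nat \<Rightarrow> nat \<Rightarrow> nat \<Rightarrow> real"
    and ys :: "nat \<Rightarrow> real"
    and T :: ttree
    and j :: nat
  assumes "k \<le> m"
    and "\<forall>i<m. \<forall>j'<n. 0 \<le> c i j'"
    and "lp_optimal m n k c xs ys"
    and "distinct (leaves T)" and "set (leaves T) = {..<m}"
    and "j < n"
  shows "measure_pmf.expectation (rounded T ys)
           (\<lambda>Y. ordered_cost c k {i. i < m \<and> Y i = 1} j)
         \<le> 2.3589 * lp_client_cost m k c xs j"
proof -
  have feas: "lp_feasible m n k xs ys" using assms(3) by (simp add: lp_optimal_def)
  have sy: "(\<Sum>i<m. ys i) = real k" using feas by (simp add: lp_feasible_def)
  have xsy: "\<And>i. i < m \<Longrightarrow> (\<Sum>l\<in>{1..k}. xs l i j) \<le> ys i" using feas assms(6) by (simp add: lp_feasible_def)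
  have x1: "\<And>l. l \<in> {1..k} \<Longrightarrow> 1 \<le> (\<Sum>i<m. xs l i j)" using feas assms(6) by (simp add: lp_feasible_def)
  have g: "good m ys" using feas unfolding lp_feasible_def good_def by simp
  have x0: "\<And>l i. l \<in> {1..k} \<Longrightarrow> i < m \<Longrightarrow> 0 \<le> xs l i j" using feas assms(6) unfolding lp_feasible_def by simp
  have cn: "\<And>i. i < m \<Longrightarrow> 0 \<le> c i j" using assms(2,6) by simp
  have alpha: "(2.3589::real) = 23589/10000" by simp
  show ?thesis
  proof (cases "k = 0")
    case True
    then show ?thesis by (simp add: ordered_cost_def lp_client_cost_def)
  next
    case False
    then have k1: "1 \<le> k" by simp
    have m0: "0 < m" using k1 assms(1) by simp
    define w where "w = sorted_list_of_set ((\<lambda>i. c i j) ` {..<m})"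
    define D where "D = (\<lambda>s. w ! s - w ! (s - 1))"
    define S where "S = (\<lambda>s. {i. i < m \<and> c i j < w ! s})"
    define Lev where "Lev = (\<lambda>s. (\<Sum>l\<in>{1..k}. (\<Sum>i\<in>{..<m} - S s. xs l i j) / real l))"
    define gs where "gs = (\<lambda>s Y. gk k (card {i\<in>S s. Y i = (1::real)}))"
    define P where "P = rounded T ys"
    have finP: "finite (set_pmf P)" unfolding P_def by (rule finite_rounded)
    have sw: "sorted w" unfolding w_def by simp
    have D0: "\<And>s. s \<in> {1..<length w} \<Longrightarrow> 0 \<le> D s"
      unfolding D_def using sw by (auto intro!: sorted_nth_mono)
    have Tsub: "set (leaves T) = {..<m}" using assms(5) .
    have dec: "ordered_cost c k {i. i < m \<and> Y i = 1} j = harm k * w ! 0 + (\<Sum>s\<in>{1..<length w}. D s * gs s Y)"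
      if Y: "Y \<in> set_pmf P" for Y
    proof -
      have card: "card {i. i < m \<and> Y i = 1} = k" using rounded_final[OF assms(4) Tsub g sy] Y unfolding P_def by blast
      have "ordered_cost c k {i. i < m \<and> Y i = 1} j = harm k * w ! 0 +
          (\<Sum>s\<in>{1..<length w}. (w ! s - w ! (s - 1)) * gk k (card {i\<in>{i. i < m \<and> Y i = 1}. c i j < w ! s}))"
        unfolding w_def by (rule cost_decomp) (use card in auto)
      moreover have "\<And>s. {i\<in>{i. i < m \<and> Y i = 1}. c i j < w ! s} = {i\<in>S s. Y i = 1}" unfolding S_def by auto
      ultimately show ?thesis unfolding D_def gs_def by simp
    qed
    have sb: "measure_pmf.expectation P (gs s) \<le> 23589/10000 * Lev s" if s: "s \<in> {1..<length w}" for s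
    proof -
      define a where "a = (\<lambda>l. \<Sum>i\<in>S s. xs l i j)"
      define b where "b = (\<lambda>l. \<Sum>i\<in>{..<m} - S s. xs l i j)"
      define mu where "mu = (\<Sum>i\<in>S s. ys i)"
      have Ssub: "S s \<subseteq> {..<m}" unfolding S_def by auto
      have finS: "finite (S s)" using Ssub finite_subset by blast
      have ab: "0 \<le> a l \<and> 0 \<le> b l \<and> 1 \<le> a l + b l" if l: "l \<in> {1..k}" for l
      proof -
        have "a l + b l = (\<Sum>i<m. xs l i j)" unfolding a_def b_def
          using sum.subset_diff[OF Ssub, of "\<lambda>i. xs l i j"] by simp
        moreover have "0 \<le> a l" unfolding a_def using x0[OF l] Ssub by (intro sum_nonneg) auto
        moreover have "0 \<le> b l" unfolding b_def using x0[OF l] by (intro sum_nonneg) auto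
        ultimately show ?thesis using x1[OF l] by simp
      qed
      have sa: "(\<Sum>l\<in>{1..k}. a l) \<le> mu"
      proof -
        have "(\<Sum>l\<in>{1..k}. a l) = (\<Sum>i\<in>S s. \<Sum>l\<in>{1..k}. xs l i j)" unfolding a_def by (rule sum.swap)
        also have "\<dots> \<le> (\<Sum>i\<in>S s. ys i)" using xsy Ssub by (intro sum_mono) auto
        finally show ?thesis unfolding mu_def .
      qed
      have mu0: "0 \<le> mu" unfolding mu_def using g Ssub unfolding good_def by (intro sum_nonneg) auto
      note lb = lev_bounds[OF k1 ab sa mu0]
      have LevE: "Lev s = (\<Sum>l\<in>{1..k}. b l / real l)" unfolding Lev_def b_def ..
      show ?thesis unfolding P_def gs_def
        by (rule set_bound[OF k1 Ssub assms(4) Tsub g sy]) (use lb LevE mu_def in auto)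
    qed
    have "measure_pmf.expectation P (\<lambda>Y. ordered_cost c k {i. i < m \<and> Y i = 1} j)
        = (\<Sum>Y\<in>set_pmf P. pmf P Y * (harm k * w ! 0 + (\<Sum>s\<in>{1..<length w}. D s * gs s Y)))"
      unfolding E_sum[OF finP] by (intro sum.cong refl) (simp add: dec)
    also have "\<dots> = harm k * w ! 0 * (\<Sum>Y\<in>set_pmf P. pmf P Y) + (\<Sum>s\<in>{1..<length w}. D s * (\<Sum>Y\<in>set_pmf P. pmf P Y * gs s Y))"
      by (simp add: distrib_left sum.distrib sum_distrib_left sum_distrib_right sum.swap[of _ "set_pmf P"] algebra_simps)
    also have "(\<Sum>Y\<in>set_pmf P. pmf P Y) = 1" using finP by (intro sum_pmf_eq_1) auto
    also have "(\<Sum>s\<in>{1..<length w}. D s * (\<Sum>Y\<in>set_pmf P. pmf P Y * gs s Y))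
        \<le> (\<Sum>s\<in>{1..<length w}. D s * (23589/10000 * Lev s))"
    proof (intro sum_mono mult_left_mono)
      fix s assume s: "s \<in> {1..<length w}"
      show "(\<Sum>Y\<in>set_pmf P. pmf P Y * gs s Y) \<le> 23589/10000 * Lev s" using sb[OF s] unfolding E_sum[OF finP] .
      show "0 \<le> D s" using D0[OF s] .
    qed
    finally have E1': "measure_pmf.expectation P (\<lambda>Y. ordered_cost c k {i. i < m \<and> Y i = 1} j)
        \<le> harm k * w ! 0 * 1 + (\<Sum>s\<in>{1..<length w}. D s * (23589/10000 * Lev s))" by simp
    have eqs: "(\<Sum>s\<in>{1..<length w}. D s * (23589/10000 * Lev s)) = 23589/10000 * (\<Sum>s\<in>{1..<length w}. D s * Lev s)"
      by (simp only: sum_distrib_left mult.left_commute)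
    have E1: "measure_pmf.expectation P (\<lambda>Y. ordered_cost c k {i. i < m \<and> Y i = 1} j)
        \<le> harm k * w ! 0 + 23589/10000 * (\<Sum>s\<in>{1..<length w}. D s * Lev s)"
      using E1' eqs by simp
    have w0: "0 \<le> w ! 0"
    proof -
      have fin: "finite ((\<lambda>i. c i j) ` {..<m})" by simp
      have "w \<noteq> []" unfolding w_def using fin m0 by auto
      then have "w ! 0 \<in> set w" by simp
      then show ?thesis unfolding w_def using fin cn by auto
    qed
    have hk: "0 \<le> (harm k :: real)" by (rule harm_nonneg)
    have LP: "harm k * w ! 0 + (\<Sum>s\<in>{1..<length w}. D s * Lev s) \<le> lp_client_cost m k c xs j"
      using lp_decomp[where k=k and m=m and xs=xs and j=j and c=c] x1 x0 cn m0 unfolding D_def Lev_def S_def w_def by simp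
    have "harm k * w ! 0 \<le> 23589/10000 * (harm k * w ! 0)" using hk w0 by (simp add: mult_nonneg_nonneg)
    then have "measure_pmf.expectation P (\<lambda>Y. ordered_cost c k {i. i < m \<and> Y i = 1} j)
        \<le> 23589/10000 * (harm k * w ! 0 + (\<Sum>s\<in>{1..<length w}. D s * Lev s))"
      using E1 by (simp add: distrib_left)
    also have "\<dots> \<le> 23589/10000 * lp_client_cost m k c xs j" using LP by simp
    finally show ?thesis unfolding P_def alpha .
  qed
qed


end
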